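(* For every $k\ge1$ and every tuple of partitions $\nu=(\nu_1^+,\nu_1^-,\dots,\nu_k^+,\nu_k^-)$, $$m^\infty_\nu(q,k)=\sum_{T\in D(\nu)}q^{\sum_{i=1}^k|\lambda_i(T)|}.$$
   Context: Identify a partition $\lambda=(a_1\ge a_2\ge\cdots)$ with $\sum_ja_j\epsilon_j$ in $\Lambda=\bigoplus_{j\ge1}\mathbb Z\epsilon_j$; put $\omega_i=\epsilon_1+\dots+\epsilon_i$; partitions are exactly elements with all $\omega$-coordinates $\ge0$. For $x,y\in\Lambda$, $y\le x$ means $x-y$ has all $\omega$-coordinates $\ge0$. $\mathcal P$ = partitions, $\mathcal P^k$ = $k$-tuples; $|\lambda|$ = number of boxes. $SST(\nu)$ = semistandard tableaux of shape $\nu$ with entries in $\mathbb Z_{>0}$, with the standard $\mathfrak{gl}_\infty$-crystal structure. For $T\in SST(\nu)$: $\mathrm{wt}(T)=\sum_j(\#\text{entries }j)\epsilon_j$, $\varepsilon_i(T)=\max\{m\ge0:\tilde e_i^mT\ne0\}$, $\varepsilon(T)=\sum_i\varepsilon_i(T)\omega_i$. $\mathrm{CLR}^\lambda_{\alpha,\nu}=\{T\in SST(\nu):\varepsilon(T)\le\alpha,\ \alpha+\mathrm{wt}(T)=\lambda\}$; it is known that $|\mathrm{CLR}^\lambda_{\alpha,\nu}|=c^\lambda_{\alpha,\nu}$ (Littlewood–Richardson coefficient). Indices cyclic mod $k$ with representatives $1,\dots,k$ ($\lambda_0:=\lambda_k$). $\underline{SST}(\nu)=\prod_iSST(\nu_i^+)\times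 SST(\nu_i^-)$, $T=(T_1^+,T_1^-,\dots,T_k^+,T_k^-)$, $\mathrm{wt}(T_i)=\mathrm{wt}(T_i^+)-\mathrm{wt}(T_i^-)$. $\underline{\mathrm{CLR}}^\lambda_{\alpha,\nu}=\prod_{i=1}^k\mathrm{CLR}^{\lambda_i}_{\alpha_i,\nu_i^+}\times\mathrm{CLR}^{\lambda_{i-1}}_{\alpha_i,\nu_i^-}$ for $\lambda,\alpha\in\mathcal P^k$. $D(\nu)$ = set of distinguished $T$, i.e. those lying in some $\underline{\mathrm{CLR}}^\lambda_{\alpha,\nu}$ (equivalently $\sum_j\mathrm{wt}(T_j)=0$). For $T\in D(\nu)$, $\lambda_{\min}(T)$ is the coordinatewise (in $\omega$-coordinates) maximum of $S_i^\pm=\varepsilon(T_i^\pm)+\mathrm{wt}(T_i^+)-\sum_{j=2}^i\mathrm{wt}(T_j)$, $i=1,\dots,k$, and $\lambda_i(T)=\lambda_{\min}(T)+\sum_{j=2}^i\mathrm{wt}(T_j)$ (a partition). The stable $q$-multiplicity is the formal power series $$m^\infty_\nu(q,k)=\Big[\prod_{i=1}^\infty(1-q^{ki})\Big]\sum_{\alpha,\lambda\in\mathcal P^k}q^{\sum_i|\lambda_i|}\prod_{i=1}^kc^{\lambda_i}_{\alpha_i,\nu_i^+}c^{\lambda_{i-1}}_{\alpha_i,\nu_i^-}.$$ (Motivation: for the cyclic quiver action of $K=\prod_i\mathbf{GL}_{n_i}$ on $\bigoplus_i\mathrm{Hom}(\mathbb C^{n_i},\mathbb C^{n_{i+1}})$,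 this agrees with the graded multiplicity of the $K$-type $\nu$ in the harmonic polynomials up to degree $\min_i n_i$.) *)

theory Defs
  imports "HOL-Computational_Algebra.Formal_Power_Series"
begin

text \<open>An element of Lambda = direct sum of Z eps_j (j >= 1) is a function
  nat => int with finite support; the value at 0 is unused (kept 0).
  A tableau is a function nat => nat => nat: row r >= 1, column c >= 1,
  value 0 outside the shape.\<close>

type_synonym lam = "nat \<Rightarrow> int"
type_synonym tab = "nat \<Rightarrow> nat \<Rightarrow> nat"

definition Lam :: "lam set" where
  "Lam = {x. x 0 = 0 \<and> finite {j. x j \<noteq> 0}}"

text \<open>omega-coordinates: x = sum_i (x_i - x_(i+1)) omega_i\<close>
definition oc :: "lam \<Rightarrow> nat \<Rightarrow> int" where
  "oc x i = x i - x (Suc i)"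

definition from_omega :: "(nat \<Rightarrow> int) \<Rightarrow> lam" where
  "from_omega c j = (if j = 0 then 0 else (\<Sum>i\<in>{i. j \<le> i \<and> c i \<noteq> 0}. c i))"

definition Par :: "lam set" where
  "Par = {x \<in> Lam. \<forall>i\<ge>1. oc x i \<ge> 0}"

definition le_lam :: "lam \<Rightarrow> lam \<Rightarrow> bool" where
  "le_lam y x \<longleftrightarrow> (\<forall>i\<ge>1. oc y i \<le> oc x i)"

definition psize :: "lam \<Rightarrow> int" where
  "psize x = (\<Sum>j\<in>{j. x j \<noteq> 0}. x j)"

definition cnt :: "nat \<Rightarrow> nat list \<Rightarrow> nat" where
  "cnt a xs = length (filter (\<lambda>x. x = a) xs)"

definition nrows :: "lam \<Rightarrow> nat" where
  "nrows la = Max (insert 0 {j. la j \<noteq> 0})"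

definition cell :: "lam \<Rightarrow> lam \<Rightarrow> nat \<Rightarrow> nat \<Rightarrow> bool" where
  "cell la mu r c \<longleftrightarrow> 1 \<le> r \<and> mu r < int c \<and> int c \<le> la r"

definition sst_skew :: "lam \<Rightarrow> lam \<Rightarrow> tab set" where
  "sst_skew la mu = {T.
     (\<forall>r c. \<not> cell la mu r c \<longrightarrow> T r c = 0) \<and>
     (\<forall>r c. cell la mu r c \<longrightarrow> T r c \<ge> 1) \<and>
     (\<forall>r c. cell la mu r c \<and> cell la mu r (Suc c) \<longrightarrow> T r c \<le> T r (Suc c)) \<and>
     (\<forall>r c. cell la mu r c \<and> cell la mu (Suc r) c \<longrightarrow> T r c < T (Suc r) c)}"

definition zerop :: lam where "zerop = (\<lambda>_. 0)"

definition SST :: "lam \<Rightarrow> tab set" where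
  "SST nu = sst_skew nu zerop"

definition rword :: "lam \<Rightarrow> lam \<Rightarrow> tab \<Rightarrow> nat list" where
  "rword la mu T = concat (map (\<lambda>r. map (\<lambda>c. T r c) [nat (mu r) + 1..<nat (la r) + 1])
                              (rev [1..<nrows la + 1]))"

text \<open>Crystal operator e_i (i >= 1) on words via the signature rule: letters i+1 act as
  opening and letters i as closing brackets; e_i changes the leftmost unmatched i+1 into i.\<close>
definition unm :: "nat \<Rightarrow> nat list \<Rightarrow> nat \<Rightarrow> bool" where
  "unm i w p \<longleftrightarrow> p < length w \<and> w ! p = Suc i \<and>
     (\<forall>q. p < q \<and> q \<le> length w \<longrightarrow>
        cnt i (drop (Suc p) (take q w)) \<le> cnt (Suc i) (drop (Suc p) (take q w)))"

definition e_word :: "nat \<Rightarrow> nat list \<Rightarrow> nat list option" where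
  "e_word i w = (if \<exists>p. unm i w p then Some (w[(LEAST p. unm i w p) := i]) else None)"

text \<open>refill a word into the straight shape nu (inverse of the reading word)\<close>
definition offs :: "lam \<Rightarrow> nat \<Rightarrow> nat" where
  "offs nu r = (\<Sum>j\<in>{r<..nrows nu}. nat (nu j))"

definition tab_of :: "lam \<Rightarrow> nat list \<Rightarrow> tab" where
  "tab_of nu w r c = (if cell nu zerop r c then w ! (offs nu r + c - 1) else 0)"

text \<open>crystal operator e_i on SST(nu); None plays the role of 0\<close>
definition e_tab :: "lam \<Rightarrow> nat \<Rightarrow> tab \<Rightarrow> tab option" where
  "e_tab nu i T = map_option (tab_of nu) (e_word i (rword nu zerop T))"

definition e_iter :: "lam \<Rightarrow> nat \<Rightarrow> nat \<Rightarrow> tab \<Rightarrow> tab option" where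
  "e_iter nu i m T = ((\<lambda>ot. Option.bind ot (e_tab nu i)) ^^ m) (Some T)"

definition epsi :: "lam \<Rightarrow> nat \<Rightarrow> tab \<Rightarrow> nat" where
  "epsi nu i T = (GREATEST m. e_iter nu i m T \<noteq> None)"

definition eps_vec :: "lam \<Rightarrow> tab \<Rightarrow> lam" where
  "eps_vec nu T = from_omega (\<lambda>i. if i = 0 then 0 else int (epsi nu i T))"

definition wt :: "lam \<Rightarrow> tab \<Rightarrow> lam" where
  "wt nu T j = int (cnt j (rword nu zerop T))"

definition CLR :: "lam \<Rightarrow> lam \<Rightarrow> lam \<Rightarrow> tab set" where
  "CLR la al nu = {T \<in> SST nu. le_lam (eps_vec nu T) al \<and> (\<forall>j. al j + wt nu T j = la j)}"

text \<open>Littlewood-Richardson coefficient c^la_{al,nu}, via the classical Littlewood-Richardson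
  rule: number of SST of skew shape la/al with content nu whose reverse reading word
  (rows top to bottom, each right to left) is a lattice word; 0 unless al is contained in la.\<close>
definition lattice :: "nat list \<Rightarrow> bool" where
  "lattice w \<longleftrightarrow> (\<forall>p\<le>length w. \<forall>j\<ge>1. cnt (Suc j) (take p w) \<le> cnt j (take p w))"

definition lrc :: "lam \<Rightarrow> lam \<Rightarrow> lam \<Rightarrow> nat" where
  "lrc la al nu = (if \<forall>j. al j \<le> la j then
      card {S \<in> sst_skew la al. (\<forall>j\<ge>1. int (cnt j (rword la al S)) = nu j)
                               \<and> lattice (rev (rword la al S))}
    else 0)"

text \<open>k-tuples indexed by 1..k (trivial outside), cyclic predecessor\<close>
definition Ptup :: "nat \<Rightarrow> (nat \<Rightarrow> lam) set" where
  "Ptup k = {a. (\<forall>i\<in>{1..k}. a i \<in> Par) \<and> (\<forall>i. i \<notin> {1..k} \<longrightarrow> a i = zerop)}"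

definition prev :: "nat \<Rightarrow> nat \<Rightarrow> nat" where
  "prev k i = (if i = 1 then k else i - 1)"

definition ztab :: tab where "ztab = (\<lambda>_ _. 0)"

type_synonym ttup = "(nat \<Rightarrow> tab) \<times> (nat \<Rightarrow> tab)"

definition uCLR :: "nat \<Rightarrow> (nat \<Rightarrow> lam) \<Rightarrow> (nat \<Rightarrow> lam) \<Rightarrow> (nat \<Rightarrow> lam) \<Rightarrow> (nat \<Rightarrow> lam) \<Rightarrow> ttup set" where
  "uCLR k l a nup num = {(Tp, Tm).
      (\<forall>i\<in>{1..k}. Tp i \<in> CLR (l i) (a i) (nup i) \<and> Tm i \<in> CLR (l (prev k i)) (a i) (num i)) \<and>
      (\<forall>i. i \<notin> {1..k} \<longrightarrow> Tp i = ztab \<and> Tm i = ztab)}"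

definition Dset :: "nat \<Rightarrow> (nat \<Rightarrow> lam) \<Rightarrow> (nat \<Rightarrow> lam) \<Rightarrow> ttup set" where
  "Dset k nup num = (\<Union>l\<in>Ptup k. \<Union>a\<in>Ptup k. uCLR k l a nup num)"

definition wtT :: "(nat \<Rightarrow> lam) \<Rightarrow> (nat \<Rightarrow> lam) \<Rightarrow> ttup \<Rightarrow> nat \<Rightarrow> lam" where
  "wtT nup num T i j = wt (nup i) (fst T i) j - wt (num i) (snd T i) j"

definition Splus :: "(nat \<Rightarrow> lam) \<Rightarrow> (nat \<Rightarrow> lam) \<Rightarrow> ttup \<Rightarrow> nat \<Rightarrow> lam" where
  "Splus nup num T i j = eps_vec (nup i) (fst T i) j + wt (nup i) (fst T i) j
                          - (\<Sum>m\<in>{2..i}. wtT nup num T m j)"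

definition Sminus :: "(nat \<Rightarrow> lam) \<Rightarrow> (nat \<Rightarrow> lam) \<Rightarrow> ttup \<Rightarrow> nat \<Rightarrow> lam" where
  "Sminus nup num T i j = eps_vec (num i) (snd T i) j + wt (nup i) (fst T i) j
                          - (\<Sum>m\<in>{2..i}. wtT nup num T m j)"

definition lmin :: "nat \<Rightarrow> (nat \<Rightarrow> lam) \<Rightarrow> (nat \<Rightarrow> lam) \<Rightarrow> ttup \<Rightarrow> lam" where
  "lmin k nup num T = from_omega (\<lambda>i.
      Max ((\<lambda>m. oc (Splus nup num T m) i) ` {1..k} \<union> (\<lambda>m. oc (Sminus nup num T m) i) ` {1..k}))"

definition lamT :: "nat \<Rightarrow> (nat \<Rightarrow> lam) \<Rightarrow> (nat \<Rightarrow> lam) \<Rightarrow> ttup \<Rightarrow> nat \<Rightarrow> lam" where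
  "lamT k nup num T i j = lmin k nup num T j + (\<Sum>m\<in>{2..i}. wtT nup num T m j)"

definition tot_size :: "nat \<Rightarrow> (nat \<Rightarrow> lam) \<Rightarrow> (nat \<Rightarrow> lam) \<Rightarrow> ttup \<Rightarrow> int" where
  "tot_size k nup num T = (\<Sum>i\<in>{1..k}. psize (lamT k nup num T i))"

text \<open>prod_{i>=1} (1 - q^{k i}) as a formal power series: its n-th coefficient is that
  of the finite product over i = 1..n (the remaining factors are 1 mod q^{n+1}), k >= 1.\<close>
definition euler_factor :: "nat \<Rightarrow> int fps" where
  "euler_factor k = Abs_fps (\<lambda>n. fps_nth (\<Prod>i\<in>{1..n}. (1 - fps_X ^ (k * i)) :: int fps) n)"

definition lrprod :: "nat \<Rightarrow> (nat \<Rightarrow> lam) \<Rightarrow> (nat \<Rightarrow> lam) \<Rightarrow> (nat \<Rightarrow> lam) \<Rightarrow> (nat \<Rightarrow> lam) \<Rightarrow> int" where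
  "lrprod k nup num a l = (\<Prod>i\<in>{1..k}. int (lrc (l i) (a i) (nup i) * lrc (l (prev k i)) (a i) (num i)))"

text \<open>stable q-multiplicity; the sum over (alpha, lambda) in P^k x P^k is taken over its
  (finite) set of nonzero terms with sum_i |lambda_i| = n\<close>
definition m_inf :: "nat \<Rightarrow> (nat \<Rightarrow> lam) \<Rightarrow> (nat \<Rightarrow> lam) \<Rightarrow> int fps" where
  "m_inf k nup num = euler_factor k * Abs_fps (\<lambda>n.
      \<Sum>(a, l)\<in>{(a, l). a \<in> Ptup k \<and> l \<in> Ptup k \<and> (\<Sum>i\<in>{1..k}. psize (l i)) = int n
                       \<and> lrprod k nup num a l \<noteq> 0}. lrprod k nup num a l)"

end

theory Submission
  imports Defs
begin

lemma cnt_append[simp]: "cnt a (xs @ ys) = cnt a xs + cnt a ys"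
  by (simp add: cnt_def)
lemma cnt_Nil[simp]: "cnt a [] = 0" by (simp add: cnt_def)
lemma cnt_Cons: "cnt a (x # xs) = (if x = a then Suc (cnt a xs) else cnt a xs)"
  by (simp add: cnt_def)
lemma cnt_count: "cnt a xs = count (mset xs) a"
  by (induction xs) (auto simp: cnt_def)
lemma cnt_rev[simp]: "cnt a (rev xs) = cnt a xs"
  by (simp add: cnt_count)

definition gs :: "nat \<Rightarrow> nat list \<Rightarrow> nat \<Rightarrow> int" where
  "gs i w q = int (cnt (Suc i) (drop q w)) - int (cnt i (drop q w))"

definition fmax :: "nat \<Rightarrow> nat list \<Rightarrow> int" where
  "fmax i w = Max (gs i w ` {0..length w})"

lemma gs_len: "gs i w (length w) = 0" by (simp add: gs_def)

lemma gs_step: "q < length w \<Longrightarrow>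
  gs i w q = gs i w (Suc q) + (if w!q = Suc i then 1 else if w!q = i then -1 else 0)"
proof -
  assume q: "q < length w"
  have d: "drop q w = w!q # drop (Suc q) w" using q by (simp add: Cons_nth_drop_Suc)
  show ?thesis unfolding gs_def d by (auto simp: cnt_Cons)
qed

lemma gs_le_fmax: "q \<le> length w \<Longrightarrow> gs i w q \<le> fmax i w"
  unfolding fmax_def by (rule Max_ge) auto

lemma fmax_ge0: "0 \<le> fmax i w"
  using gs_le_fmax[of "length w" w i] gs_len[of i w] by simp

lemma fmax_att: "\<exists>q\<le>length w. gs i w q = fmax i w"
proof -
  have "fmax i w \<in> gs i w ` {0..length w}" unfolding fmax_def by (rule Max_in) auto
  thus ?thesis by auto
qed

lemma drop_take_split: "p \<le> q \<Longrightarrow> q \<le> length w \<Longrightarrow> drop p w = drop p (take q w) @ drop q w"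
proof -
  assume a: "p \<le> q" "q \<le> length w"
  have "drop p (take q w) @ drop q w = take (q - p) (drop p w) @ drop (q - p) (drop p w)"
    using a by (simp add: drop_take)
  also have "\<dots> = drop p w" by (rule append_take_drop_id)
  finally show ?thesis by simp
qed

lemma unm_iff: "unm i w p \<longleftrightarrow> p < length w \<and> w!p = Suc i \<and>
   (\<forall>q. p < q \<and> q \<le> length w \<longrightarrow> gs i w q \<le> gs i w (Suc p))"
proof -
  have key: "cnt i (drop (Suc p) (take q w)) \<le> cnt (Suc i) (drop (Suc p) (take q w))
     \<longleftrightarrow> gs i w q \<le> gs i w (Suc p)" if "p < q" "q \<le> length w" for q
  proof -
    have d: "drop (Suc p) w = drop (Suc p) (take q w) @ drop q w"
      using that by (intro drop_take_split) auto
    show ?thesis unfolding gs_def d by simp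
  qed
  show ?thesis unfolding unm_def using key by auto
qed

lemma unm_gt: "unm i w p \<Longrightarrow> p < q \<Longrightarrow> q \<le> length w \<Longrightarrow> gs i w q < gs i w p"
  using unm_iff[of i w p] gs_step[of p w i] by force

lemma no_unm: "fmax i w = 0 \<Longrightarrow> \<not> unm i w p"
proof
  assume f: "fmax i w = 0" and u: "unm i w p"
  have pl: "p < length w" using u unm_iff by blast
  have "gs i w (length w) < gs i w p" using unm_gt[OF u pl] by simp
  moreover have "gs i w p \<le> 0" using gs_le_fmax[of p w i] pl f by simp
  ultimately show False using gs_len by simp
qed

lemma e_word_zero: "fmax i w = 0 \<Longrightarrow> e_word i w = None"
  using no_unm unfolding e_word_def by auto

lemma cnt_update: "j < length xs \<Longrightarrow>
   int (cnt a (xs[j := x])) = int (cnt a xs) - (if xs!j = a then 1 else 0) + (if x = a then 1 else 0)"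
proof -
  assume j: "j < length xs"
  have "xs!j \<in># mset xs" using j by simp
  hence "count (mset xs) a = count (mset xs - {#xs!j#}) a + (if xs!j = a then 1 else 0)"
    by (auto simp: count_diff)
  thus ?thesis unfolding cnt_count mset_update[OF j] by auto
qed

lemma e_word_pos:
  assumes f: "fmax i w > 0"
  shows "\<exists>w'. e_word i w = Some w' \<and> length w' = length w \<and> fmax i w' = fmax i w - 1"
proof -
  define f where "f = fmax i w"
  define S where "S = {q. q \<le> length w \<and> gs i w q = f}"
  have Sfin: "finite S" unfolding S_def by auto
  have Sne: "S \<noteq> {}" using fmax_att[of w i] unfolding S_def f_def by auto
  define p where "p = Max S"
  have pS: "p \<in> S" unfolding p_def using Sfin Sne by (rule Max_in)
  have pmax: "q \<in> S \<Longrightarrow> q \<le> p" for q unfolding p_def using Sfin by simp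
  have pl: "p < length w"
  proof (rule ccontr)
    assume "\<not> p < length w"
    hence "p = length w" using pS unfolding S_def by auto
    thus False using pS gs_len[of i w] f unfolding S_def f_def by auto
  qed
  have gp: "gs i w p = f" using pS S_def by auto
  have gt: "gs i w q \<le> f - 1" if "p < q" "q \<le> length w" for q
  proof -
    have "gs i w q \<le> f" using gs_le_fmax that f_def by auto
    moreover have "q \<notin> S" using pmax that by force
    ultimately show ?thesis using that S_def by auto
  qed
  have gsp: "gs i w (Suc p) \<le> f - 1" using gt pl by auto
  have wp: "w!p = Suc i" and gsp2: "gs i w (Suc p) = f - 1"
    using gs_step[OF pl, of i] gp gsp gs_le_fmax[of "Suc p" w i] pl f_def
    by (auto split: if_splits)
  have up: "unm i w p" unfolding unm_iff using pl wp gt gsp2 by auto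
  have least: "(LEAST q. unm i w q) = p"
  proof (rule Least_equality)
    show "unm i w p" by (rule up)
  next
    fix q assume uq: "unm i w q"
    show "p \<le> q"
    proof (rule ccontr)
      assume "\<not> p \<le> q"
      hence "gs i w p < gs i w q" using unm_gt[OF uq] pl by auto
      moreover have "gs i w q \<le> f" using gs_le_fmax f_def uq unm_iff by (metis less_imp_le)
      ultimately show False using gp by simp
    qed
  qed
  define w' where "w' = w[p := i]"
  have ew: "e_word i w = Some w'" unfolding e_word_def w'_def using up least by auto
  have len: "length w' = length w" unfolding w'_def by simp
  have g1: "gs i w' q = gs i w q" if "p < q" for q
    unfolding gs_def w'_def using that by (simp add: drop_update_cancel)
  have g2: "gs i w' q = gs i w q - 2" if "q \<le> p" for q
  proof -
    have d: "drop q w' = (drop q w)[p - q := i]" unfolding w'_def using that by (simp add: drop_update_swap)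
    have l: "p - q < length (drop q w)" using that pl by auto
    have n: "drop q w ! (p - q) = Suc i" using that pl wp by simp
    show ?thesis unfolding gs_def d using cnt_update[OF l, of "Suc i" i] cnt_update[OF l, of i i] n
      by simp
  qed
  have "fmax i w' = f - 1"
  proof -
    have "gs i w' q \<le> f - 1" if "q \<le> length w'" for q
    proof (cases "p < q")
      case True thus ?thesis using g1 gt that len by auto
    next
      case False thus ?thesis using g2 gs_le_fmax[of q w i] that len f_def by force
    qed
    moreover obtain q0 where "q0 \<le> length w'" "gs i w' q0 = fmax i w'" using fmax_att by blast
    ultimately have le: "fmax i w' \<le> f - 1" by metis
    have "gs i w' (Suc p) = f - 1" using g1 gsp2 by simp
    hence "f - 1 \<le> fmax i w'" using gs_le_fmax[of "Suc p" w' i] pl len by force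
    thus ?thesis using le by simp
  qed
  thus ?thesis using ew len f_def by auto
qed

definition Fb :: "nat \<Rightarrow> nat list option \<Rightarrow> nat list option" where
  "Fb i ot = Option.bind ot (e_word i)"

lemma Fb_None[simp]: "(Fb i ^^ m) None = None"
  by (induction m) (auto simp: Fb_def)

lemma Fb_iter: "(Fb i ^^ m) (Some w) \<noteq> None \<longleftrightarrow> int m \<le> fmax i w"
proof (induction m arbitrary: w)
  case 0 thus ?case using fmax_ge0 by simp
next
  case (Suc m)
  have e: "(Fb i ^^ Suc m) (Some w) = (Fb i ^^ m) (e_word i w)"
    by (simp add: funpow_Suc_right Fb_def del: funpow.simps)
  show ?case
  proof (cases "fmax i w > 0")
    case True
    then obtain w' where "e_word i w = Some w'" "fmax i w' = fmax i w - 1" using e_word_pos by blast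
    thus ?thesis using e Suc by auto
  next
    case False
    hence "fmax i w = 0" using fmax_ge0[of i w] by simp
    thus ?thesis using e e_word_zero by simp
  qed
qed

lemma e_word_len: "e_word i w = Some w' \<Longrightarrow> length w' = length w"
  unfolding e_word_def by (auto split: if_splits)


lemma map_nth_take_drop: "o' + a \<le> length w \<Longrightarrow>
  map (\<lambda>c. w ! (o' + c - 1)) [1..<a+1] = take a (drop o' w)"
  by (rule nth_equalityI) (auto simp del: upt_Suc)

lemma offs_Suc: "Suc m \<le> nrows nu \<Longrightarrow> offs nu m = nat (nu (Suc m)) + offs nu (Suc m)"
proof -
  assume a: "Suc m \<le> nrows nu"
  have "{m<..nrows nu} = insert (Suc m) {Suc m<..nrows nu}" using a by auto
  thus ?thesis unfolding offs_def by simp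
qed

lemma offs_top: "offs nu (nrows nu) = 0" unfolding offs_def by simp

lemma offs_le: "m \<le> nrows nu \<Longrightarrow> offs nu m \<le> offs nu 0"
proof (induction m)
  case (Suc m) thus ?case using offs_Suc[of m nu] by simp
qed simp

lemma rw_gen:
  assumes "length w = offs nu 0" "m \<le> nrows nu"
  shows "concat (map (\<lambda>r. map (\<lambda>c. tab_of nu w r c) [1..<nat (nu r) + 1]) (rev [1..<m+1]))
         = drop (offs nu m) w"
  using assms(2)
proof (induction m)
  case 0 thus ?case using assms(1) by simp
next
  case (Suc m)
  have os: "offs nu m = nat (nu (Suc m)) + offs nu (Suc m)" using offs_Suc Suc by blast
  have ol: "offs nu (Suc m) + nat (nu (Suc m)) \<le> length w" using os offs_le[of m nu] Suc assms(1) by simp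
  have row: "map (\<lambda>c. tab_of nu w (Suc m) c) [1..<nat (nu (Suc m)) + 1]
          = map (\<lambda>c. w ! (offs nu (Suc m) + c - 1)) [1..<nat (nu (Suc m)) + 1]"
    by (rule map_cong) (auto simp: tab_of_def cell_def zerop_def)
  have eq: "rev [1..<Suc m+1] = Suc m # rev [1..<m+1]" by simp
  have row2: "map (\<lambda>c. tab_of nu w (Suc m) c) [1..<nat (nu (Suc m)) + 1]
      = take (nat (nu (Suc m))) (drop (offs nu (Suc m)) w)"
    using row map_nth_take_drop[OF ol] by (rule trans)
  have "concat (map (\<lambda>r. map (\<lambda>c. tab_of nu w r c) [1..<nat (nu r) + 1]) (rev [1..<Suc m+1]))
     = take (nat (nu (Suc m))) (drop (offs nu (Suc m)) w) @ drop (offs nu m) w"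
    unfolding eq using Suc by (simp only: list.map concat.simps row2 append_same_eq)
  also have "\<dots> = drop (offs nu (Suc m)) w"
    using os by (metis add.commute append_take_drop_id drop_drop)
  finally show ?case .
qed

lemma rword_tab_of: "length w = offs nu 0 \<Longrightarrow> rword nu zerop (tab_of nu w) = w"
  using rw_gen[of w nu "nrows nu"] unfolding rword_def by (simp add: offs_top zerop_def)

lemma len_rword_gen: "length (concat (map (\<lambda>r. map (\<lambda>c. T r c) [1..<nat (nu r) + 1]) (rev [1..<m+1])))
   = (\<Sum>r\<in>{1..m}. nat (nu r))"
  by (induction m) (auto simp: add.commute)

lemma len_rword: "length (rword nu zerop T) = offs nu 0"
proof -
  have "{0<..nrows nu} = {1..nrows nu}" by auto
  thus ?thesis unfolding rword_def offs_def using len_rword_gen[of T nu "nrows nu"]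
    by (simp add: zerop_def)
qed

definition Gt :: "lam \<Rightarrow> nat \<Rightarrow> tab option \<Rightarrow> tab option" where
  "Gt nu i ot = Option.bind ot (e_tab nu i)"

lemma Gt_None[simp]: "(Gt nu i ^^ m) None = None"
  by (induction m) (auto simp: Gt_def)

lemma e_tab_tab_of: "length w = offs nu 0 \<Longrightarrow>
   e_tab nu i (tab_of nu w) = map_option (tab_of nu) (e_word i w)"
  unfolding e_tab_def by (simp add: rword_tab_of)

lemma Gt_iter: "length w = offs nu 0 \<Longrightarrow>
   (Gt nu i ^^ m) (Some (tab_of nu w)) = map_option (tab_of nu) ((Fb i ^^ m) (Some w))"
proof (induction m arbitrary: w)
  case 0 thus ?case by simp
next
  case (Suc m)
  have a: "(Gt nu i ^^ Suc m) (Some (tab_of nu w)) = (Gt nu i ^^ m) (map_option (tab_of nu) (e_word i w))"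
    using Suc.prems by (simp add: funpow_Suc_right Gt_def e_tab_tab_of del: funpow.simps)
  have b: "(Fb i ^^ Suc m) (Some w) = (Fb i ^^ m) (e_word i w)"
    by (simp add: funpow_Suc_right Fb_def del: funpow.simps)
  show ?case
  proof (cases "e_word i w")
    case None thus ?thesis using a b by simp
  next
    case (Some w')
    hence "length w' = offs nu 0" using e_word_len Suc.prems by metis
    thus ?thesis using a b Some Suc.IH by simp
  qed
qed

lemma Gt_eq: "(\<lambda>ot. Option.bind ot (e_tab nu i)) = Gt nu i"
  by (simp add: Gt_def fun_eq_iff)

lemma e_iter_iff: "e_iter nu i m T \<noteq> None \<longleftrightarrow> (Fb i ^^ m) (Some (rword nu zerop T)) \<noteq> None"
proof (cases m)
  case 0 thus ?thesis by (simp add: e_iter_def)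
next
  case (Suc m')
  have a: "e_iter nu i m T = (Gt nu i ^^ m') (map_option (tab_of nu) (e_word i (rword nu zerop T)))"
    unfolding e_iter_def Suc Gt_eq
    by (simp add: funpow_Suc_right del: funpow.simps) (simp add: Gt_def e_tab_def)
  have b: "(Fb i ^^ m) (Some (rword nu zerop T)) = (Fb i ^^ m') (e_word i (rword nu zerop T))"
    unfolding Suc by (simp add: funpow_Suc_right Fb_def del: funpow.simps)
  show ?thesis
  proof (cases "e_word i (rword nu zerop T)")
    case None thus ?thesis using a b by simp
  next
    case (Some w')
    hence "length w' = offs nu 0" using e_word_len len_rword by metis
    thus ?thesis using a b Some Gt_iter[of w' nu m' i] by simp
  qed
qed

lemma epsi_fmax: "epsi nu i T = nat (fmax i (rword nu zerop T))"
  unfolding epsi_def e_iter_iff Fb_iter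
  by (rule Greatest_equality) (use fmax_ge0 in auto)

lemma epsi_le_iff: "int (epsi nu i T) \<le> K \<longleftrightarrow>
   (\<forall>q\<le>length (rword nu zerop T). gs i (rword nu zerop T) q \<le> K)"
proof -
  define w where "w = rword nu zerop T"
  have "int (epsi nu i T) = fmax i w" unfolding epsi_fmax w_def using fmax_ge0 by simp
  moreover have "fmax i w \<le> K \<longleftrightarrow> (\<forall>q\<le>length w. gs i w q \<le> K)"
    using gs_le_fmax fmax_att by (metis order_trans)
  ultimately show ?thesis unfolding w_def by simp
qed


definition lecnt :: "nat \<Rightarrow> nat list \<Rightarrow> nat" where
  "lecnt v xs = length (filter (\<lambda>x. x \<le> v) xs)"

lemma lecnt_Cons: "lecnt v (x # xs) = (if x \<le> v then Suc (lecnt v xs) else lecnt v xs)"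
  by (simp add: lecnt_def)

lemma lecnt_zero: "\<forall>y\<in>set xs. v < y \<Longrightarrow> lecnt v xs = 0"
  by (auto simp: lecnt_def filter_empty_conv not_le)

lemma sorted_le_iff: "sorted xs \<Longrightarrow> i < length xs \<Longrightarrow> (xs!i \<le> v \<longleftrightarrow> i < lecnt v xs)"
proof (induction xs arbitrary: i)
  case Nil thus ?case by simp
next
  case (Cons x ys)
  have s: "sorted ys" and xl: "\<forall>y\<in>set ys. x \<le> y" using Cons.prems by auto
  show ?case
  proof (cases i)
    case 0
    show ?thesis
    proof (cases "x \<le> v")
      case True thus ?thesis using 0 by (simp add: lecnt_Cons)
    next
      case False
      hence "lecnt v ys = 0" using xl by (intro lecnt_zero) force
      thus ?thesis using 0 False by (simp add: lecnt_Cons)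
    qed
  next
    case (Suc i')
    have il: "i' < length ys" using Cons.prems Suc by simp
    show ?thesis
    proof (cases "x \<le> v")
      case True thus ?thesis using Suc Cons.IH[OF s il] by (simp add: lecnt_Cons)
    next
      case False
      hence "lecnt v ys = 0" using xl by (intro lecnt_zero) force
      moreover have "ys!i' > v"
      proof -
        have "ys!i' \<in> set ys" using il by (rule nth_mem)
        thus ?thesis using xl False by auto
      qed
      ultimately show ?thesis using Suc False by (simp add: lecnt_Cons)
    qed
  qed
qed

lemma dropWhile_sorted_gt: "sorted x \<Longrightarrow> y \<in> set (dropWhile (\<lambda>y. y \<le> a) x) \<Longrightarrow> a < y"
proof (induction x)
  case (Cons z zs)
  show ?case
  proof (cases "z \<le> a")
    case True thus ?thesis using Cons by auto
  next
    case False thus ?thesis using Cons.prems by auto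
  qed
qed simp

lemma cnt_zero: "a \<notin> set xs \<Longrightarrow> cnt a xs = 0"
  by (simp add: cnt_def filter_empty_conv) blast

lemma cnt_drop_le: "cnt a (drop q x) \<le> cnt a x"
proof -
  have "cnt a x = cnt a (take q x) + cnt a (drop q x)"
    by (metis append_take_drop_id cnt_append)
  thus ?thesis by simp
qed

lemma sorted_suffix:
  assumes "sorted x"
  shows "(\<forall>q\<le>length x. int (cnt (Suc a) (drop q x)) + A \<le> int (cnt a (drop q x)) + B)
     \<longleftrightarrow> int (cnt (Suc a) x) + A \<le> B"
proof
  assume h: "\<forall>q\<le>length x. int (cnt (Suc a) (drop q x)) + A \<le> int (cnt a (drop q x)) + B"
  define P where "P = (\<lambda>y::nat. y \<le> a)"
  define q0 where "q0 = length (takeWhile P x)"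
  have d: "drop q0 x = dropWhile P x" unfolding q0_def by (simp add: dropWhile_eq_drop)
  have c1: "cnt a (dropWhile P x) = 0"
    using dropWhile_sorted_gt[OF assms, of _ a] unfolding P_def by (intro cnt_zero) blast
  have c2: "cnt (Suc a) (takeWhile P x) = 0"
    by (rule cnt_zero) (auto dest: set_takeWhileD simp: P_def)
  have "cnt (Suc a) x = cnt (Suc a) (takeWhile P x) + cnt (Suc a) (dropWhile P x)"
    by (metis takeWhile_dropWhile_id cnt_append)
  hence c3: "cnt (Suc a) (dropWhile P x) = cnt (Suc a) x" using c2 by simp
  have "q0 \<le> length x" unfolding q0_def by (rule length_takeWhile_le)
  thus "int (cnt (Suc a) x) + A \<le> B" using h d c1 c3 by force
next
  assume h: "int (cnt (Suc a) x) + A \<le> B"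
  show "\<forall>q\<le>length x. int (cnt (Suc a) (drop q x)) + A \<le> int (cnt a (drop q x)) + B"
  proof (intro allI impI)
    fix q
    have "int (cnt (Suc a) (drop q x)) \<le> int (cnt (Suc a) x)" using cnt_drop_le by simp
    thus "int (cnt (Suc a) (drop q x)) + A \<le> int (cnt a (drop q x)) + B" using h by linarith
  qed
qed

definition SufOK :: "nat \<Rightarrow> int \<Rightarrow> nat list \<Rightarrow> bool" where
  "SufOK a K w \<longleftrightarrow> (\<forall>q\<le>length w. int (cnt (Suc a) (drop q w)) \<le> int (cnt a (drop q w)) + K)"

lemma suf_append: "SufOK a K (x @ ys) \<longleftrightarrow> SufOK a K ys \<and>
  (\<forall>q\<le>length x. int (cnt (Suc a) (drop q x)) + int (cnt (Suc a) ys)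
                  \<le> int (cnt a (drop q x)) + (int (cnt a ys) + K))"
proof
  assume h: "SufOK a K (x @ ys)"
  have "SufOK a K ys" unfolding SufOK_def
  proof (intro allI impI)
    fix q assume "q \<le> length ys"
    thus "int (cnt (Suc a) (drop q ys)) \<le> int (cnt a (drop q ys)) + K"
      using h[unfolded SufOK_def, rule_format, of "length x + q"] by simp
  qed
  moreover have "\<forall>q\<le>length x. int (cnt (Suc a) (drop q x)) + int (cnt (Suc a) ys)
                  \<le> int (cnt a (drop q x)) + (int (cnt a ys) + K)"
  proof (intro allI impI)
    fix q assume "q \<le> length x"
    thus "int (cnt (Suc a) (drop q x)) + int (cnt (Suc a) ys)
                  \<le> int (cnt a (drop q x)) + (int (cnt a ys) + K)"
      using h[unfolded SufOK_def, rule_format, of q] by simp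
  qed
  ultimately show "SufOK a K ys \<and> (\<forall>q\<le>length x. int (cnt (Suc a) (drop q x)) + int (cnt (Suc a) ys)
                  \<le> int (cnt a (drop q x)) + (int (cnt a ys) + K))" by blast
next
  assume h: "SufOK a K ys \<and> (\<forall>q\<le>length x. int (cnt (Suc a) (drop q x)) + int (cnt (Suc a) ys)
                  \<le> int (cnt a (drop q x)) + (int (cnt a ys) + K))"
  show "SufOK a K (x @ ys)" unfolding SufOK_def
  proof (intro allI impI)
    fix q assume q: "q \<le> length (x @ ys)"
    show "int (cnt (Suc a) (drop q (x @ ys))) \<le> int (cnt a (drop q (x @ ys))) + K"
    proof (cases "q \<le> length x")
      case True thus ?thesis using h by (auto simp: add.assoc)
    next
      case False
      hence "drop q (x @ ys) = drop (q - length x) ys" by simp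
      moreover have "q - length x \<le> length ys" using q by simp
      ultimately show ?thesis using h unfolding SufOK_def by simp
    qed
  qed
qed

lemma cnt_concat_rows: "cnt a (concat (map B (rev [1..<m+1]))) = (\<Sum>j\<in>{1..m}. cnt a (B j))"
  by (induction m) (auto simp: add.commute)

lemma split_all_Suc: "(\<forall>j\<in>{1..Suc m}. P j) = ((\<forall>j\<in>{1..m}. P j) \<and> P (Suc m))"
proof -
  have "{1..Suc m} = insert (Suc m) {1..m}" by auto
  thus ?thesis by auto
qed

lemma suf_blocks:
  assumes "\<forall>j\<in>{1..m}. sorted (B j)" "0 \<le> K"
  shows "SufOK a K (concat (map B (rev [1..<m+1]))) \<longleftrightarrow>
    (\<forall>j\<in>{1..m}. (\<Sum>j'\<in>{1..j}. int (cnt (Suc a) (B j'))) \<le> (\<Sum>j'\<in>{1..<j}. int (cnt a (B j'))) + K)"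
  using assms(1)
proof (induction m)
  case 0 thus ?case using assms(2) by (simp add: SufOK_def)
next
  case (Suc m)
  define W where "W = concat (map B (rev [1..<m+1]))"
  have eq: "concat (map B (rev [1..<Suc m+1])) = B (Suc m) @ W" unfolding W_def by simp
  have srt: "sorted (B (Suc m))" using Suc.prems by auto
  have cW: "int (cnt c W) = (\<Sum>j'\<in>{1..m}. int (cnt c (B j')))" for c
    unfolding W_def cnt_concat_rows by simp
  have IH: "SufOK a K W \<longleftrightarrow> (\<forall>j\<in>{1..m}. (\<Sum>j'\<in>{1..j}. int (cnt (Suc a) (B j'))) \<le> (\<Sum>j'\<in>{1..<j}. int (cnt a (B j'))) + K)"
    unfolding W_def using Suc by auto
  have last: "(\<forall>q\<le>length (B (Suc m)). int (cnt (Suc a) (drop q (B (Suc m)))) + int (cnt (Suc a) W)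
                  \<le> int (cnt a (drop q (B (Suc m)))) + (int (cnt a W) + K))
       \<longleftrightarrow> (\<Sum>j'\<in>{1..Suc m}. int (cnt (Suc a) (B j'))) \<le> (\<Sum>j'\<in>{1..<Suc m}. int (cnt a (B j'))) + K"
  proof -
    have "{1..<Suc m} = {1..m}" by auto
    moreover have "(\<Sum>j'\<in>{1..Suc m}. int (cnt (Suc a) (B j'))) = int (cnt (Suc a) (B (Suc m))) + int (cnt (Suc a) W)"
      using cW by simp
    ultimately show ?thesis using sorted_suffix[OF srt, of a "int (cnt (Suc a) W)" "int (cnt a W) + K"] cW
      by (simp add: ac_simps)
  qed
  show ?case unfolding eq suf_append IH last split_all_Suc by (rule refl)
qed

lemma lattice_rev: "lattice (rev w) \<longleftrightarrow> (\<forall>j\<ge>1. SufOK j 0 w)"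
proof -
  have "lattice (rev w) \<longleftrightarrow> (\<forall>p\<le>length w. \<forall>j\<ge>1. cnt (Suc j) (drop (length w - p) w) \<le> cnt j (drop (length w - p) w))"
    unfolding lattice_def by (simp add: take_rev)
  also have "\<dots> \<longleftrightarrow> (\<forall>q\<le>length w. \<forall>j\<ge>1. cnt (Suc j) (drop q w) \<le> cnt j (drop q w))"
  proof
    assume h: "\<forall>p\<le>length w. \<forall>j\<ge>1. cnt (Suc j) (drop (length w - p) w) \<le> cnt j (drop (length w - p) w)"
    show "\<forall>q\<le>length w. \<forall>j\<ge>1. cnt (Suc j) (drop q w) \<le> cnt j (drop q w)"
    proof (intro allI impI)
      fix q j :: nat assume "q \<le> length w" "1 \<le> j"
      thus "cnt (Suc j) (drop q w) \<le> cnt j (drop q w)" using h[rule_format, of "length w - q" j] by simp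
    qed
  qed auto
  finally show ?thesis unfolding SufOK_def by auto
qed


declare upt_Suc[simp del]

lemma Par_Lam: "x \<in> Par \<Longrightarrow> x \<in> Lam" by (simp add: Par_def)

lemma Par_dec: "x \<in> Par \<Longrightarrow> 1 \<le> i \<Longrightarrow> x (Suc i) \<le> x i"
  unfolding Par_def oc_def by auto

lemma Par_mono: "x \<in> Par \<Longrightarrow> 1 \<le> i \<Longrightarrow> i \<le> j \<Longrightarrow> x j \<le> x i"
proof (induction j)
  case 0 thus ?case by simp
next
  case (Suc j)
  show ?case
  proof (cases "i = Suc j")
    case True thus ?thesis by simp
  next
    case False
    hence "i \<le> j" using Suc by simp
    thus ?thesis using Suc Par_dec[of x j] by fastforce
  qed
qed

lemma nrows_zero: "x \<in> Lam \<Longrightarrow> nrows x < j \<Longrightarrow> x j = 0"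
proof (rule ccontr)
  assume a: "x \<in> Lam" "nrows x < j" "x j \<noteq> 0"
  have "finite {j. x j \<noteq> 0}" using a by (simp add: Lam_def)
  hence "j \<le> nrows x" unfolding nrows_def using a by (intro Max_ge) auto
  thus False using a by simp
qed

lemma Par_nonneg: "x \<in> Par \<Longrightarrow> 0 \<le> x j"
proof (cases "j = 0")
  case True
  assume "x \<in> Par" thus ?thesis using True by (simp add: Par_def Lam_def)
next
  case False
  assume p: "x \<in> Par"
  have "x (j + nrows x + 1) \<le> x j" using Par_mono[OF p] False by simp
  moreover have "x (j + nrows x + 1) = 0" using nrows_zero[OF Par_Lam[OF p]] by simp
  ultimately show ?thesis by simp
qed

lemma Lam_zero0: "x \<in> Lam \<Longrightarrow> x 0 = 0" by (simp add: Lam_def)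

definition rowT :: "lam \<Rightarrow> lam \<Rightarrow> tab \<Rightarrow> nat \<Rightarrow> nat list" where
  "rowT la mu T r = map (T r) [nat (mu r) + 1..<nat (la r) + 1]"

definition fillL :: "lam \<Rightarrow> lam \<Rightarrow> (nat \<Rightarrow> nat list) \<Rightarrow> tab" where
  "fillL la mu L r c = (if cell la mu r c then L r ! (c - nat (mu r) - 1) else 0)"

lemma rword_rowT: "rword la mu T = concat (map (rowT la mu T) (rev [1..<nrows la + 1]))"
  unfolding rword_def rowT_def by simp

lemma length_rowT: "length (rowT la mu T r) = nat (la r) - nat (mu r)"
  unfolding rowT_def by simp

definition shape :: "lam \<Rightarrow> lam \<Rightarrow> bool" where
  "shape la mu \<longleftrightarrow> la \<in> Par \<and> mu \<in> Par \<and> (\<forall>j. mu j \<le> la j)"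

lemma cell_nat: "shape la mu \<Longrightarrow> cell la mu r c \<longleftrightarrow> 1 \<le> r \<and> nat (mu r) < c \<and> c \<le> nat (la r)"
  unfolding shape_def cell_def using Par_nonneg[of mu r] Par_nonneg[of la r] by auto

lemma fill_rowT: "shape la mu \<Longrightarrow> T \<in> sst_skew la mu \<Longrightarrow> fillL la mu (rowT la mu T) = T"
proof (intro ext)
  fix r c assume sh: "shape la mu" and T: "T \<in> sst_skew la mu"
  show "fillL la mu (rowT la mu T) r c = T r c"
  proof (cases "cell la mu r c")
    case True
    hence "nat (mu r) < c" "c \<le> nat (la r)" using cell_nat[OF sh] by auto
    thus ?thesis using True unfolding fillL_def rowT_def by simp
  next
    case False thus ?thesis using T unfolding fillL_def sst_skew_def by auto
  qed
qed

lemma rowT_fill: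
  assumes sh: "shape la mu" and len: "length (L r) = nat (la r) - nat (mu r)"
  shows "rowT la mu (fillL la mu L) r = L r"
proof (cases "r = 0")
  case True
  have "la 0 = 0" using sh Lam_zero0 Par_Lam unfolding shape_def by blast
  thus ?thesis using True len unfolding rowT_def by simp
next
  case False
  show ?thesis unfolding rowT_def
  proof (rule nth_equalityI)
    show "length (map (fillL la mu L r) [nat (mu r) + 1..<nat (la r) + 1]) = length (L r)" using len by simp
  next
    fix i assume "i < length (map (fillL la mu L r) [nat (mu r) + 1..<nat (la r) + 1])"
    hence i: "i < nat (la r) - nat (mu r)" by simp
    have "cell la mu r (nat (mu r) + 1 + i)" using cell_nat[OF sh] i False by auto
    thus "map (fillL la mu L r) [nat (mu r) + 1..<nat (la r) + 1] ! i = L r ! i"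
      using i by (simp add: fillL_def)
  qed
qed

lemma lecnt_le_length: "lecnt v xs \<le> length xs"
  unfolding lecnt_def by simp

lemma col_iff:
  fixes X Y :: "nat list" and mX mY lX lY :: nat
  assumes "length X = lX - mX" "length Y = lY - mY" "mY \<le> mX" "lY \<le> lX" "mX \<le> lX" "mY \<le> lY"
    and sX: "sorted X" and sY: "sorted Y" and pos: "\<forall>y\<in>set Y. 1 \<le> y"
  shows "(\<forall>c. mX < c \<and> c \<le> lX \<and> mY < c \<and> c \<le> lY \<longrightarrow> X!(c - mX - 1) < Y!(c - mY - 1))
     \<longleftrightarrow> (\<forall>v\<ge>1. mY + lecnt v Y \<le> mX + lecnt (v - 1) X)"
proof
  assume h: "\<forall>c. mX < c \<and> c \<le> lX \<and> mY < c \<and> c \<le> lY \<longrightarrow> X!(c - mX - 1) < Y!(c - mY - 1)"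
  show "\<forall>v\<ge>1. mY + lecnt v Y \<le> mX + lecnt (v - 1) X"
  proof (intro allI impI)
    fix v :: nat assume v: "1 \<le> v"
    show "mY + lecnt v Y \<le> mX + lecnt (v - 1) X"
    proof (rule ccontr)
      assume c0: "\<not> ?thesis"
      define c where "c = mY + lecnt v Y"
      have ly: "lecnt v Y \<le> length Y" by (rule lecnt_le_length)
      have c1: "mY < c" "c \<le> lY" "mX < c" using c0 assms(2,3,6) ly unfolding c_def by auto
      have c2: "c \<le> lX" using c1 assms(4) by simp
      have iy: "c - mY - 1 < lecnt v Y" "c - mY - 1 < length Y" using c1 ly assms(2) unfolding c_def by auto
      have yv: "Y!(c - mY - 1) \<le> v" using sorted_le_iff[OF sY iy(2)] iy(1) by simp
      have ix: "c - mX - 1 < length X" using c1 c2 assms(1) by simp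
      have "\<not> (c - mX - 1 < lecnt (v - 1) X)" using c0 unfolding c_def by simp
      hence "\<not> X!(c - mX - 1) \<le> v - 1" using sorted_le_iff[OF sX ix] by simp
      moreover have "X!(c - mX - 1) < Y!(c - mY - 1)" using h c1 c2 by blast
      ultimately show False using yv by simp
    qed
  qed
next
  assume h: "\<forall>v\<ge>1. mY + lecnt v Y \<le> mX + lecnt (v - 1) X"
  show "\<forall>c. mX < c \<and> c \<le> lX \<and> mY < c \<and> c \<le> lY \<longrightarrow> X!(c - mX - 1) < Y!(c - mY - 1)"
  proof (intro allI impI)
    fix c assume c: "mX < c \<and> c \<le> lX \<and> mY < c \<and> c \<le> lY"
    define v where "v = Y!(c - mY - 1)"
    have iy: "c - mY - 1 < length Y" using c assms(2) by arith
    have v1: "1 \<le> v" using pos iy unfolding v_def by simp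
    have "c - mY - 1 < lecnt v Y" using sorted_le_iff[OF sY iy, of v] unfolding v_def by simp
    hence "c \<le> mX + lecnt (v - 1) X" using h v1 c by fastforce
    hence "c - mX - 1 < lecnt (v - 1) X" using c by arith
    moreover have ix: "c - mX - 1 < length X" using c assms(1) by arith
    ultimately have "X!(c - mX - 1) \<le> v - 1" using sorted_le_iff[OF sX ix] by simp
    thus "X!(c - mX - 1) < Y!(c - mY - 1)" using v1 unfolding v_def by simp
  qed
qed

lemma shape_la0: "shape la mu \<Longrightarrow> la 0 = 0"
  using Lam_zero0 Par_Lam unfolding shape_def by blast

lemma shape_mono:
  assumes sh: "shape la mu" and r: "1 \<le> r"
  shows "nat (mu (Suc r)) \<le> nat (mu r)" "nat (la (Suc r)) \<le> nat (la r)"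
        "nat (mu r) \<le> nat (la r)"
  using Par_dec[of mu r] Par_dec[of la r] sh r unfolding shape_def by (auto simp: nat_mono)

lemma shape_le: "shape la mu \<Longrightarrow> nat (mu r) \<le> nat (la r)"
  unfolding shape_def by (auto simp: nat_mono)

lemma sst_rows:
  assumes sh: "shape la mu" and T: "T \<in> sst_skew la mu"
  shows "sorted (rowT la mu T r) \<and> (\<forall>x\<in>set (rowT la mu T r). 1 \<le> x)"
proof (cases "r = 0")
  case True thus ?thesis using shape_la0[OF sh] unfolding rowT_def by simp
next
  case False
  have srt: "sorted (rowT la mu T r)" unfolding sorted_iff_nth_Suc
  proof (intro allI impI)
    fix i assume i: "Suc i < length (rowT la mu T r)"
    hence i': "Suc i < nat (la r) - nat (mu r)" by (simp add: length_rowT)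
    have c1: "cell la mu r (nat (mu r) + 1 + i)" "cell la mu r (Suc (nat (mu r) + 1 + i))"
      using cell_nat[OF sh] i' False by auto
    have "T r (nat (mu r) + 1 + i) \<le> T r (Suc (nat (mu r) + 1 + i))"
      using T c1 unfolding sst_skew_def by blast
    thus "rowT la mu T r ! i \<le> rowT la mu T r ! Suc i" using i' unfolding rowT_def by simp
  qed
  have "\<forall>x\<in>set (rowT la mu T r). 1 \<le> x"
  proof
    fix x assume "x \<in> set (rowT la mu T r)"
    then obtain i where i: "i < length (rowT la mu T r)" "x = rowT la mu T r ! i" by (metis in_set_conv_nth)
    hence i': "i < nat (la r) - nat (mu r)" by (simp add: length_rowT)
    have "cell la mu r (nat (mu r) + 1 + i)" using cell_nat[OF sh] i' False by auto
    hence "1 \<le> T r (nat (mu r) + 1 + i)" using T unfolding sst_skew_def by blast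
    thus "1 \<le> x" using i i' unfolding rowT_def by simp
  qed
  thus ?thesis using srt by blast
qed

definition colcond :: "lam \<Rightarrow> (nat \<Rightarrow> nat list) \<Rightarrow> bool" where
  "colcond mu L \<longleftrightarrow> (\<forall>r\<ge>1. \<forall>v\<ge>1. nat (mu (Suc r)) + lecnt v (L (Suc r)) \<le> nat (mu r) + lecnt (v - 1) (L r))"

lemma fill_sst_iff:
  assumes sh: "shape la mu" and len: "\<forall>r. length (L r) = nat (la r) - nat (mu r)"
  shows "fillL la mu L \<in> sst_skew la mu \<longleftrightarrow>
    (\<forall>r. sorted (L r) \<and> (\<forall>x\<in>set (L r). 1 \<le> x)) \<and> colcond mu L"
proof -
  define T where "T = fillL la mu L"
  have rw: "rowT la mu T r = L r" for r unfolding T_def using rowT_fill[OF sh] len by blast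
  have Tcell: "cell la mu r c \<Longrightarrow> T r c = L r ! (c - nat (mu r) - 1)" for r c
    unfolding T_def fillL_def by simp
  have colr: "(\<forall>c. cell la mu r c \<and> cell la mu (Suc r) c \<longrightarrow> T r c < T (Suc r) c)
     \<longleftrightarrow> (\<forall>v\<ge>1. nat (mu (Suc r)) + lecnt v (L (Suc r)) \<le> nat (mu r) + lecnt (v - 1) (L r))"
    if r: "1 \<le> r" and srt: "sorted (L r)" "sorted (L (Suc r))" and pos: "\<forall>y\<in>set (L (Suc r)). 1 \<le> y" for r
  proof -
    have "(\<forall>c. cell la mu r c \<and> cell la mu (Suc r) c \<longrightarrow> T r c < T (Suc r) c)
      \<longleftrightarrow> (\<forall>c. nat (mu r) < c \<and> c \<le> nat (la r) \<and> nat (mu (Suc r)) < c \<and> c \<le> nat (la (Suc r)) \<longrightarrow>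
            L r ! (c - nat (mu r) - 1) < L (Suc r) ! (c - nat (mu (Suc r)) - 1))"
    proof -
      have ce: "cell la mu r c \<and> cell la mu (Suc r) c \<longleftrightarrow> nat (mu r) < c \<and> c \<le> nat (la r) \<and> nat (mu (Suc r)) < c \<and> c \<le> nat (la (Suc r))" for c
        using cell_nat[OF sh, of r c] cell_nat[OF sh, of "Suc r" c] r by simp
      have tv: "cell la mu r c \<and> cell la mu (Suc r) c \<Longrightarrow> (T r c < T (Suc r) c \<longleftrightarrow> L r ! (c - nat (mu r) - 1) < L (Suc r) ! (c - nat (mu (Suc r)) - 1))" for c
        using Tcell by simp
      show ?thesis
      proof (intro iffI allI impI)
        fix c assume h1: "\<forall>c. cell la mu r c \<and> cell la mu (Suc r) c \<longrightarrow> T r c < T (Suc r) c"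
          and h2: "nat (mu r) < c \<and> c \<le> nat (la r) \<and> nat (mu (Suc r)) < c \<and> c \<le> nat (la (Suc r))"
        have "cell la mu r c \<and> cell la mu (Suc r) c" using ce h2 by blast
        thus "L r ! (c - nat (mu r) - 1) < L (Suc r) ! (c - nat (mu (Suc r)) - 1)" using h1 tv by blast
      next
        fix c assume h1: "\<forall>c. nat (mu r) < c \<and> c \<le> nat (la r) \<and> nat (mu (Suc r)) < c \<and> c \<le> nat (la (Suc r)) \<longrightarrow>
            L r ! (c - nat (mu r) - 1) < L (Suc r) ! (c - nat (mu (Suc r)) - 1)"
          and h2: "cell la mu r c \<and> cell la mu (Suc r) c"
        show "T r c < T (Suc r) c" using h1 ce[of c] h2 tv[OF h2] by blast
      qed
    qed
    also have "\<dots> \<longleftrightarrow> (\<forall>v\<ge>1. nat (mu (Suc r)) + lecnt v (L (Suc r)) \<le> nat (mu r) + lecnt (v - 1) (L r))"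
      apply (rule col_iff) using pos by (simp_all add: len shape_mono[OF sh r] shape_le[OF sh] srt)
    finally show ?thesis .
  qed
  show ?thesis
  proof
    assume T: "fillL la mu L \<in> sst_skew la mu"
    have rows: "sorted (L r) \<and> (\<forall>x\<in>set (L r). 1 \<le> x)" for r
      using sst_rows[OF sh T, of r] rw[of r] unfolding T_def by simp
    have "colcond mu L" unfolding colcond_def
    proof (intro allI impI)
      fix r v :: nat assume r: "1 \<le> r" and v: "1 \<le> v"
      have tc: "\<forall>c. cell la mu r c \<and> cell la mu (Suc r) c \<longrightarrow> T r c < T (Suc r) c"
        using T unfolding T_def sst_skew_def by blast
      have a1: "sorted (L r)" "sorted (L (Suc r))" "\<forall>y\<in>set (L (Suc r)). 1 \<le> y"
        using rows[of r] rows[of "Suc r"] by auto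
      have "\<forall>v\<ge>1. nat (mu (Suc r)) + lecnt v (L (Suc r)) \<le> nat (mu r) + lecnt (v - 1) (L r)"
        using colr[OF r a1] tc by simp
      thus "nat (mu (Suc r)) + lecnt v (L (Suc r)) \<le> nat (mu r) + lecnt (v - 1) (L r)"
        using v by simp
    qed
    thus "(\<forall>r. sorted (L r) \<and> (\<forall>x\<in>set (L r). 1 \<le> x)) \<and> colcond mu L" using rows by simp
  next
    assume h: "(\<forall>r. sorted (L r) \<and> (\<forall>x\<in>set (L r). 1 \<le> x)) \<and> colcond mu L"
    have z: "\<forall>r c. \<not> cell la mu r c \<longrightarrow> T r c = 0" unfolding T_def fillL_def by simp
    have p: "\<forall>r c. cell la mu r c \<longrightarrow> T r c \<ge> 1"
    proof (intro allI impI)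
      fix r c assume c: "cell la mu r c"
      hence "c - nat (mu r) - 1 < length (L r)" using cell_nat[OF sh] len by auto
      hence "L r ! (c - nat (mu r) - 1) \<in> set (L r)" by (rule nth_mem)
      hence "1 \<le> L r ! (c - nat (mu r) - 1)" using h by simp
      thus "T r c \<ge> 1" using Tcell[OF c] by simp
    qed
    have rr: "\<forall>r c. cell la mu r c \<and> cell la mu r (Suc c) \<longrightarrow> T r c \<le> T r (Suc c)"
    proof (intro allI impI)
      fix r c assume c: "cell la mu r c \<and> cell la mu r (Suc c)"
      hence i: "Suc (c - nat (mu r) - 1) < length (L r)" "Suc c - nat (mu r) - 1 = Suc (c - nat (mu r) - 1)"
        using cell_nat[OF sh] len by auto
      have "sorted (L r)" using h by simp
      hence "L r ! (c - nat (mu r) - 1) \<le> L r ! Suc (c - nat (mu r) - 1)"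
        using i(1) unfolding sorted_iff_nth_Suc by blast
      thus "T r c \<le> T r (Suc c)" using Tcell c i(2) by simp
    qed
    have cc: "\<forall>r c. cell la mu r c \<and> cell la mu (Suc r) c \<longrightarrow> T r c < T (Suc r) c"
    proof (intro allI impI)
      fix r c assume c: "cell la mu r c \<and> cell la mu (Suc r) c"
      hence r: "1 \<le> r" using cell_nat[OF sh] by auto
      have a1: "sorted (L r)" "sorted (L (Suc r))" "\<forall>y\<in>set (L (Suc r)). 1 \<le> y"
        using h by auto
      have "\<forall>v\<ge>1. nat (mu (Suc r)) + lecnt v (L (Suc r)) \<le> nat (mu r) + lecnt (v - 1) (L r)"
        using h r unfolding colcond_def by blast
      hence "\<forall>c. cell la mu r c \<and> cell la mu (Suc r) c \<longrightarrow> T r c < T (Suc r) c"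
        using colr[OF r a1] by simp
      thus "T r c < T (Suc r) c" using c by blast
    qed
    show "fillL la mu L \<in> sst_skew la mu" using z p rr cc unfolding T_def[symmetric] sst_skew_def by blast
  qed
qed


definition repl :: "(nat \<Rightarrow> nat) \<Rightarrow> nat \<Rightarrow> nat list" where
  "repl f B = concat (map (\<lambda>v. replicate (f v) v) [1..<B+1])"

lemma repl_Suc: "repl f (Suc B) = repl f B @ replicate (f (Suc B)) (Suc B)"
  unfolding repl_def by (simp add: upt_Suc)

lemma repl_0: "repl f 0 = []" unfolding repl_def by simp

lemma cnt_replicate: "cnt a (replicate n x) = (if x = a then n else 0)"
  by (induction n) (auto simp: cnt_Cons)

lemma cnt_repl: "cnt a (repl f B) = (if 1 \<le> a \<and> a \<le> B then f a else 0)"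
  by (induction B) (auto simp: repl_Suc repl_0 cnt_replicate)

lemma set_repl: "set (repl f B) \<subseteq> {1..B}"
  by (induction B) (auto simp: repl_Suc repl_0)

lemma sorted_repl: "sorted (repl f B)"
proof (induction B)
  case 0 thus ?case by (simp add: repl_0)
next
  case (Suc B)
  thus ?case using set_repl[of f B] by (auto simp: repl_Suc sorted_append)
qed

lemma length_repl: "length (repl f B) = (\<Sum>v\<in>{1..B}. f v)"
  by (induction B) (auto simp: repl_Suc repl_0)

lemma lecnt_sum0: "lecnt v xs = (\<Sum>a\<in>{0..v}. cnt a xs)"
proof (induction xs)
  case Nil thus ?case by (simp add: lecnt_def)
next
  case (Cons x xs)
  have "(\<Sum>a\<in>{0..v}. cnt a (x # xs)) = (\<Sum>a\<in>{0..v}. (if x = a then 1 else 0) + cnt a xs)"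
    by (rule sum.cong) (auto simp: cnt_Cons)
  also have "\<dots> = (if x \<le> v then 1 else 0) + (\<Sum>a\<in>{0..v}. cnt a xs)"
    by (simp add: sum.distrib)
  finally show ?case using Cons by (simp add: lecnt_Cons)
qed

lemma lecnt_sum: "0 \<notin> set xs \<Longrightarrow> lecnt v xs = (\<Sum>a\<in>{1..v}. cnt a xs)"
proof -
  assume z: "0 \<notin> set xs"
  have "{0..v} = insert 0 {1..v}" by auto
  moreover have "cnt 0 xs = 0" using z by (rule cnt_zero)
  ultimately show ?thesis unfolding lecnt_sum0 by simp
qed

lemma len_sum: "set xs \<subseteq> {1..B} \<Longrightarrow> length xs = (\<Sum>a\<in>{1..B}. cnt a xs)"
proof -
  assume s: "set xs \<subseteq> {1..B}"
  have "filter (\<lambda>x. x \<le> B) xs = xs" using s by (intro filter_True) auto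
  hence "lecnt B xs = length xs" unfolding lecnt_def by simp
  moreover have "0 \<notin> set xs" using s by auto
  ultimately show ?thesis using lecnt_sum[of xs B] by simp
qed

lemma sorted_eq: "sorted xs \<Longrightarrow> sorted ys \<Longrightarrow> (\<forall>a. cnt a xs = cnt a ys) \<Longrightarrow> xs = ys"
proof -
  assume a: "sorted xs" "sorted ys" "\<forall>a. cnt a xs = cnt a ys"
  have m: "mset xs = mset ys" using a(3) by (intro multiset_eqI) (simp add: cnt_count)
  have "sort ys = xs" using properties_for_sort[OF m a(1)] .
  moreover have "sort ys = ys" using a(2) by (simp add: sorted_sort_id)
  ultimately show ?thesis by simp
qed

lemma ext_range:
  fixes f g :: "nat \<Rightarrow> int" and K C :: int and N :: nat
  assumes z: "\<forall>j>N. f j = 0 \<and> g j = 0" and g0: "\<forall>j. 0 \<le> g j" and KC: "K \<le> C"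
  shows "(\<forall>j\<in>{1..N}. K + (\<Sum>j'\<in>{1..j}. f j') \<le> C + (\<Sum>j'\<in>{1..<j}. g j'))
     \<longleftrightarrow> (\<forall>j\<ge>1. K + (\<Sum>j'\<in>{1..j}. f j') \<le> C + (\<Sum>j'\<in>{1..<j}. g j'))"
proof
  assume h: "\<forall>j\<in>{1..N}. K + (\<Sum>j'\<in>{1..j}. f j') \<le> C + (\<Sum>j'\<in>{1..<j}. g j')"
  show "\<forall>j\<ge>1. K + (\<Sum>j'\<in>{1..j}. f j') \<le> C + (\<Sum>j'\<in>{1..<j}. g j')"
  proof (intro allI impI)
    fix j :: nat assume j: "1 \<le> j"
    show "K + (\<Sum>j'\<in>{1..j}. f j') \<le> C + (\<Sum>j'\<in>{1..<j}. g j')"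
    proof (cases "j \<le> N")
      case True thus ?thesis using h j by auto
    next
      case False
      have sf: "(\<Sum>j'\<in>{1..j}. f j') = (\<Sum>j'\<in>{1..N}. f j')"
        by (rule sum.mono_neutral_right) (use False z in auto)
      have sg: "(\<Sum>j'\<in>{1..<j}. g j') = (\<Sum>j'\<in>{1..N}. g j')"
        by (rule sum.mono_neutral_right) (use False z in auto)
      show ?thesis
      proof (cases "N = 0")
        case True
        hence "(\<Sum>j'\<in>{1..N}. f j') = 0" "0 \<le> (\<Sum>j'\<in>{1..N}. g j')" by auto
        thus ?thesis using sf sg KC by linarith
      next
        case False
        hence "K + (\<Sum>j'\<in>{1..N}. f j') \<le> C + (\<Sum>j'\<in>{1..<N}. g j')" using h by auto
        moreover have "(\<Sum>j'\<in>{1..<N}. g j') \<le> (\<Sum>j'\<in>{1..N}. g j')"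
          by (rule sum_mono2) (use g0 in auto)
        ultimately show ?thesis using sf sg by linarith
      qed
    qed
  qed
qed auto


lemma oc_from_omega:
  assumes fin: "finite {i. c i \<noteq> 0}" and j: "1 \<le> j"
  shows "oc (from_omega c) j = c j"
proof -
  define S where "S j = {i. j \<le> i \<and> c i \<noteq> 0}" for j
  have fS: "finite (S j)" for j using fin unfolding S_def by (rule rev_finite_subset) auto
  have "S j = (if c j \<noteq> 0 then insert j (S (Suc j)) else S (Suc j))" unfolding S_def
    by (auto simp: Suc_le_eq order.order_iff_strict)
  moreover have "j \<notin> S (Suc j)" unfolding S_def by simp
  ultimately have "sum c (S j) = c j + sum c (S (Suc j))"
    using fS by (cases "c j = 0") auto
  thus ?thesis using j unfolding oc_def from_omega_def S_def by simp
qed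

lemma from_omega_0[simp]: "from_omega c 0 = 0" by (simp add: from_omega_def)

lemma from_omega_zero_beyond: "\<forall>i\<ge>n. c i = 0 \<Longrightarrow> n \<le> j \<Longrightarrow> from_omega c j = 0"
  unfolding from_omega_def by auto

lemma zerop_Par: "zerop \<in> Par"
  unfolding Par_def Lam_def oc_def zerop_def by simp

lemma shape_SST: "nu \<in> Par \<Longrightarrow> shape nu zerop"
  unfolding shape_def using zerop_Par Par_nonneg by (auto simp: zerop_def)

lemma fmax_pos_mem: "0 < fmax i w \<Longrightarrow> Suc i \<in> set w"
proof -
  assume f: "0 < fmax i w"
  obtain q where q: "q \<le> length w" "gs i w q = fmax i w" using fmax_att by blast
  hence "cnt (Suc i) (drop q w) \<noteq> 0" using f unfolding gs_def by linarith
  hence "Suc i \<in> set (drop q w)" by (metis cnt_zero)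
  thus ?thesis by (rule in_set_dropD)
qed

lemma epsi_fin: "finite {i. (if i = 0 then 0 else int (epsi nu i T)) \<noteq> 0}"
proof -
  define w where "w = rword nu zerop T"
  have "{i. (if i = 0 then 0 else int (epsi nu i T)) \<noteq> 0} \<subseteq> {i. Suc i \<in> set w}"
  proof
    fix i assume "i \<in> {i. (if i = 0 then 0 else int (epsi nu i T)) \<noteq> 0}"
    hence "0 < fmax i w" unfolding w_def epsi_fmax by (auto split: if_splits)
    thus "i \<in> {i. Suc i \<in> set w}" using fmax_pos_mem by simp
  qed
  moreover have "finite {i. Suc i \<in> set w}"
  proof (rule finite_subset)
    show "{i. Suc i \<in> set w} \<subseteq> (\<lambda>x. x - 1) ` set w"
    proof
      fix i assume "i \<in> {i. Suc i \<in> set w}"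
      hence "Suc i \<in> set w" by simp
      thus "i \<in> (\<lambda>x. x - 1) ` set w" by (rule rev_image_eqI) simp
    qed
  qed simp
  ultimately show ?thesis by (rule finite_subset)
qed

lemma oc_eps: "1 \<le> i \<Longrightarrow> oc (eps_vec nu T) i = int (epsi nu i T)"
  unfolding eps_vec_def using oc_from_omega[OF epsi_fin] by simp

definition QT :: "lam \<Rightarrow> tab \<Rightarrow> nat \<Rightarrow> nat \<Rightarrow> nat" where
  "QT nu T j v = cnt v (rowT nu zerop T j)"

definition CTq :: "(nat \<Rightarrow> nat \<Rightarrow> nat) \<Rightarrow> bool" where
  "CTq Q \<longleftrightarrow> (\<forall>j\<ge>1. \<forall>v\<ge>1. (\<Sum>v'\<in>{1..v}. Q (Suc j) v') \<le> (\<Sum>v'\<in>{1..<v}. Q j v'))"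

definition CSq :: "lam \<Rightarrow> (nat \<Rightarrow> nat \<Rightarrow> nat) \<Rightarrow> bool" where
  "CSq al Q \<longleftrightarrow> (\<forall>r\<ge>1. \<forall>j\<ge>1. nat (al (Suc r)) + (\<Sum>j'\<in>{1..j}. Q j' (Suc r)) \<le> nat (al r) + (\<Sum>j'\<in>{1..<j}. Q j' r))"

lemma CSq_int: "CSq al Q \<longleftrightarrow> (\<forall>r\<ge>1. \<forall>j\<ge>1. int (nat (al (Suc r))) + (\<Sum>j'\<in>{1..j}. int (Q j' (Suc r)))
     \<le> int (nat (al r)) + (\<Sum>j'\<in>{1..<j}. int (Q j' r)))"
  unfolding CSq_def by (simp only: of_nat_sum[symmetric] of_nat_add[symmetric] of_nat_le_iff)

definition Mset :: "lam \<Rightarrow> lam \<Rightarrow> lam \<Rightarrow> (nat \<Rightarrow> nat \<Rightarrow> nat) set" where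
  "Mset la al nu = {Q. (\<forall>j v. Q j v \<noteq> 0 \<longrightarrow> 1 \<le> j \<and> j \<le> nrows nu \<and> 1 \<le> v \<and> v \<le> nrows la) \<and>
     (\<forall>j. (\<Sum>v\<in>{1..nrows la}. Q j v) = nat (nu j)) \<and>
     (\<forall>v. (\<Sum>j\<in>{1..nrows nu}. Q j v) = nat (la v) - nat (al v)) \<and> CTq Q \<and> CSq al Q}"

lemma rowT_zero_beyond: "nu \<in> Par \<Longrightarrow> (j = 0 \<or> nrows nu < j) \<Longrightarrow> rowT nu mu T j = []"
  unfolding rowT_def using nrows_zero[of nu j] Par_Lam[of nu] Lam_zero0[of nu] by auto

lemma QT_zero_beyond: "nu \<in> Par \<Longrightarrow> (j = 0 \<or> nrows nu < j) \<Longrightarrow> QT nu T j v = 0"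
  unfolding QT_def using rowT_zero_beyond by simp

lemma wt_QT: "wt nu T v = int (\<Sum>j\<in>{1..nrows nu}. QT nu T j v)"
  unfolding wt_def QT_def rword_rowT cnt_concat_rows by simp

lemma sum_1_lt: "1 \<le> v \<Longrightarrow> {1..v - 1} = {1..<v::nat}" by auto

lemma CTq_QT:
  assumes nu: "nu \<in> Par" and T: "T \<in> SST nu"
  shows "CTq (QT nu T)"
proof -
  have sh: "shape nu zerop" using shape_SST[OF nu] .
  have T': "T \<in> sst_skew nu zerop" using T unfolding SST_def .
  have eq: "fillL nu zerop (rowT nu zerop T) = T" by (rule fill_rowT[OF sh T'])
  have len: "\<forall>r. length (rowT nu zerop T r) = nat (nu r) - nat (zerop r)" by (simp add: length_rowT)
  have "fillL nu zerop (rowT nu zerop T) \<in> sst_skew nu zerop" using eq T' by simp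
  hence "colcond zerop (rowT nu zerop T)" using fill_sst_iff[OF sh len] by blast
  hence cc: "\<forall>r\<ge>1. \<forall>v\<ge>1. lecnt v (rowT nu zerop T (Suc r)) \<le> lecnt (v - 1) (rowT nu zerop T r)"
    unfolding colcond_def by (simp add: zerop_def)
  have z: "0 \<notin> set (rowT nu zerop T r)" for r using sst_rows[OF sh T', of r] by auto
  show ?thesis unfolding CTq_def
  proof (intro allI impI)
    fix j v :: nat assume j: "1 \<le> j" and v: "1 \<le> v"
    have "lecnt v (rowT nu zerop T (Suc j)) \<le> lecnt (v - 1) (rowT nu zerop T j)" using cc j v by blast
    thus "(\<Sum>v'\<in>{1..v}. QT nu T (Suc j) v') \<le> (\<Sum>v'\<in>{1..<v}. QT nu T j v')"
      unfolding QT_def lecnt_sum[OF z] sum_1_lt[OF v] .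
  qed
qed

lemma eps_iff:
  assumes nu: "nu \<in> Par" and al: "al \<in> Par" and T: "T \<in> SST nu"
  shows "le_lam (eps_vec nu T) al \<longleftrightarrow> CSq al (QT nu T)"
proof -
  have sh: "shape nu zerop" using shape_SST[OF nu] .
  have T': "T \<in> sst_skew nu zerop" using T unfolding SST_def .
  define R where "R = rowT nu zerop T"
  define N where "N = nrows nu"
  have srt: "\<forall>j\<in>{1..N}. sorted (R j)" using sst_rows[OF sh T'] unfolding R_def by blast
  have w: "rword nu zerop T = concat (map R (rev [1..<N+1]))" unfolding R_def N_def by (rule rword_rowT)
  have alnn: "0 \<le> al j" for j using Par_nonneg[OF al] .
  have step: "int (epsi nu i T) \<le> oc al i \<longleftrightarrow>
      (\<forall>j\<ge>1. int (nat (al (Suc i))) + (\<Sum>j'\<in>{1..j}. int (QT nu T j' (Suc i)))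
              \<le> int (nat (al i)) + (\<Sum>j'\<in>{1..<j}. int (QT nu T j' i)))" if i: "1 \<le> i" for i
  proof -
    have K: "0 \<le> oc al i" using al i unfolding Par_def by auto
    have "int (epsi nu i T) \<le> oc al i \<longleftrightarrow> SufOK i (oc al i) (rword nu zerop T)"
      unfolding epsi_le_iff SufOK_def gs_def by (simp add: diff_le_eq add.commute)
    also have "\<dots> \<longleftrightarrow> (\<forall>j\<in>{1..N}. (\<Sum>j'\<in>{1..j}. int (cnt (Suc i) (R j'))) \<le> (\<Sum>j'\<in>{1..<j}. int (cnt i (R j'))) + oc al i)"
      unfolding w by (rule suf_blocks[OF srt K])
    also have "\<dots> \<longleftrightarrow> (\<forall>j\<in>{1..N}. int (nat (al (Suc i))) + (\<Sum>j'\<in>{1..j}. int (QT nu T j' (Suc i)))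
              \<le> int (nat (al i)) + (\<Sum>j'\<in>{1..<j}. int (QT nu T j' i)))"
    proof (intro ball_cong refl)
      have n1: "int (nat (al i)) = al i" "int (nat (al (Suc i))) = al (Suc i)" using alnn by auto
      fix j
      show "((\<Sum>j'\<in>{1..j}. int (cnt (Suc i) (R j'))) \<le> (\<Sum>j'\<in>{1..<j}. int (cnt i (R j'))) + oc al i) \<longleftrightarrow>
         (int (nat (al (Suc i))) + (\<Sum>j'\<in>{1..j}. int (QT nu T j' (Suc i)))
              \<le> int (nat (al i)) + (\<Sum>j'\<in>{1..<j}. int (QT nu T j' i)))"
        unfolding QT_def R_def oc_def n1 by (rule iffI; linarith)
    qed
    also have "\<dots> \<longleftrightarrow> (\<forall>j\<ge>1. int (nat (al (Suc i))) + (\<Sum>j'\<in>{1..j}. int (QT nu T j' (Suc i)))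
              \<le> int (nat (al i)) + (\<Sum>j'\<in>{1..<j}. int (QT nu T j' i)))"
    proof (rule ext_range)
      show "\<forall>j>N. int (QT nu T j (Suc i)) = 0 \<and> int (QT nu T j i) = 0"
        using QT_zero_beyond[OF nu] unfolding N_def by simp
      show "\<forall>j. 0 \<le> int (QT nu T j i)" by simp
      show "int (nat (al (Suc i))) \<le> int (nat (al i))" using Par_dec[OF al i] by simp
    qed
    finally show ?thesis .
  qed
  have "le_lam (eps_vec nu T) al \<longleftrightarrow> (\<forall>i\<ge>1. int (epsi nu i T) \<le> oc al i)"
    unfolding le_lam_def using oc_eps by simp
  also have "\<dots> \<longleftrightarrow> CSq al (QT nu T)"
    unfolding CSq_int
  proof (intro iffI allI impI)
    fix r j :: nat assume h: "\<forall>i\<ge>1. int (epsi nu i T) \<le> oc al i" and r: "1 \<le> r" and j: "1 \<le> j"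
    have "int (epsi nu r T) \<le> oc al r" using h r by blast
    thus "int (nat (al (Suc r))) + (\<Sum>j'\<in>{1..j}. int (QT nu T j' (Suc r))) \<le> int (nat (al r)) + (\<Sum>j'\<in>{1..<j}. int (QT nu T j' r))"
      using step[OF r] j by blast
  next
    fix i :: nat assume h: "\<forall>r\<ge>1. \<forall>j\<ge>1. int (nat (al (Suc r))) + (\<Sum>j'\<in>{1..j}. int (QT nu T j' (Suc r))) \<le> int (nat (al r)) + (\<Sum>j'\<in>{1..<j}. int (QT nu T j' r))"
      and i: "1 \<le> i"
    show "int (epsi nu i T) \<le> oc al i" using step[OF i] h i by blast
  qed
  finally show ?thesis .
qed


lemma colcond_zerop_iff:
  assumes z: "\<forall>r. 0 \<notin> set (L r)"
  shows "colcond zerop L \<longleftrightarrow> CTq (\<lambda>j v. cnt v (L j))"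
proof -
  have e: "lecnt v (L (Suc r)) \<le> lecnt (v - 1) (L r) \<longleftrightarrow>
      (\<Sum>v'\<in>{1..v}. cnt v' (L (Suc r))) \<le> (\<Sum>v'\<in>{1..<v}. cnt v' (L r))" if v: "1 \<le> v" for r v
    unfolding lecnt_sum[OF z[rule_format]] sum_1_lt[OF v] ..
  show ?thesis unfolding colcond_def CTq_def zerop_def
  proof (intro iffI allI impI)
    fix r v :: nat assume h: "\<forall>r\<ge>1. \<forall>v\<ge>1. nat (0::int) + lecnt v (L (Suc r)) \<le> nat 0 + lecnt (v - 1) (L r)"
      and r: "1 \<le> r" and v: "1 \<le> v"
    have "lecnt v (L (Suc r)) \<le> lecnt (v - 1) (L r)" using h r v by simp
    thus "(\<Sum>v'\<in>{1..v}. cnt v' (L (Suc r))) \<le> (\<Sum>v'\<in>{1..<v}. cnt v' (L r))" using e[OF v] by simp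
  next
    fix r v :: nat assume h: "\<forall>j\<ge>1. \<forall>v\<ge>1. (\<Sum>v'\<in>{1..v}. cnt v' (L (Suc j))) \<le> (\<Sum>v'\<in>{1..<v}. cnt v' (L j))"
      and r: "1 \<le> r" and v: "1 \<le> v"
    have "(\<Sum>v'\<in>{1..v}. cnt v' (L (Suc r))) \<le> (\<Sum>v'\<in>{1..<v}. cnt v' (L r))" using h r v by blast
    thus "nat (0::int) + lecnt v (L (Suc r)) \<le> nat 0 + lecnt (v - 1) (L r)" using e[OF v] by simp
  qed
qed

lemma sum_pos_elem: "finite A \<Longrightarrow> j \<in> A \<Longrightarrow> 0 < (f j :: nat) \<Longrightarrow> 0 < sum f A"
  by (metis gr0I sum_eq_0_iff)

lemma QT_in_Mset:
  assumes la: "la \<in> Par" and al: "al \<in> Par" and nu: "nu \<in> Par" and le: "\<forall>j. al j \<le> la j"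
    and T: "T \<in> CLR la al nu"
  shows "QT nu T \<in> Mset la al nu"
proof -
  have TS: "T \<in> SST nu" and ep: "le_lam (eps_vec nu T) al" and wl: "\<forall>j. al j + wt nu T j = la j"
    using T unfolding CLR_def by auto
  have sh: "shape nu zerop" using shape_SST[OF nu] .
  have T': "T \<in> sst_skew nu zerop" using TS unfolding SST_def .
  define R where "R = rowT nu zerop T"
  define B where "B = nrows la"
  define N where "N = nrows nu"
  have Q: "QT nu T j v = cnt v (R j)" for j v unfolding QT_def R_def ..
  have pos: "\<forall>x\<in>set (R j). 1 \<le> x" for j using sst_rows[OF sh T'] unfolding R_def by blast
  have jr: "1 \<le> j \<and> j \<le> N" if "R j \<noteq> []" for j
  proof -
    have "\<not> (j = 0 \<or> N < j)" using rowT_zero_beyond[OF nu, of j zerop T] that unfolding R_def N_def by blast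
    thus ?thesis by linarith
  qed
  have setR: "set (R j) \<subseteq> {1..B}" for j
  proof
    fix x assume x: "x \<in> set (R j)"
    have x1: "1 \<le> x" using pos x by blast
    have "x \<le> B"
    proof (rule ccontr)
      assume "\<not> x \<le> B"
      hence lz: "la x = 0" using nrows_zero[OF Par_Lam[OF la]] unfolding B_def by simp
      have "cnt x (R j) \<noteq> 0" using x by (simp add: cnt_count)
      moreover have "j \<in> {1..N}" using jr x by force
      ultimately have "0 < (\<Sum>j\<in>{1..N}. QT nu T j x)" using Q by (intro sum_pos_elem) auto
      hence "0 < wt nu T x" using wt_QT[of nu T x] unfolding N_def by (simp del: of_nat_sum)
      moreover have "0 \<le> al x" using Par_nonneg[OF al] .
      ultimately show False using wl[rule_format, of x] lz by linarith
    qed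
    thus "x \<in> {1..B}" using x1 by simp
  qed
  have supp: "\<forall>j v. QT nu T j v \<noteq> 0 \<longrightarrow> 1 \<le> j \<and> j \<le> nrows nu \<and> 1 \<le> v \<and> v \<le> nrows la"
  proof (intro allI impI)
    fix j v assume "QT nu T j v \<noteq> 0"
    hence "cnt v (R j) \<noteq> 0" using Q by simp
    hence v: "v \<in> set (R j)" by (simp add: cnt_count)
    hence "R j \<noteq> []" by auto
    thus "1 \<le> j \<and> j \<le> nrows nu \<and> 1 \<le> v \<and> v \<le> nrows la" using jr setR[of j] v unfolding N_def B_def by auto
  qed
  have rows: "\<forall>j. (\<Sum>v\<in>{1..nrows la}. QT nu T j v) = nat (nu j)"
  proof
    fix j
    have "length (R j) = nat (nu j)" unfolding R_def length_rowT by (simp add: zerop_def)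
    thus "(\<Sum>v\<in>{1..nrows la}. QT nu T j v) = nat (nu j)" using len_sum[OF setR[of j]] Q unfolding B_def by simp
  qed
  have cols: "\<forall>v. (\<Sum>j\<in>{1..nrows nu}. QT nu T j v) = nat (la v) - nat (al v)"
  proof
    fix v
    have "int (\<Sum>j\<in>{1..nrows nu}. QT nu T j v) = wt nu T v" using wt_QT[of nu T v] by (simp del: of_nat_sum)
    hence "int (\<Sum>j\<in>{1..nrows nu}. QT nu T j v) = la v - al v" using wl[rule_format, of v] by linarith
    moreover have "int (nat (la v) - nat (al v)) = la v - al v"
      using le[rule_format, of v] Par_nonneg[OF al, of v] by simp
    ultimately show "(\<Sum>j\<in>{1..nrows nu}. QT nu T j v) = nat (la v) - nat (al v)" by linarith
  qed
  have "CTq (QT nu T)" using CTq_QT[OF nu TS] .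
  moreover have "CSq al (QT nu T)" using eps_iff[OF nu al TS] ep by simp
  ultimately show ?thesis unfolding Mset_def using supp rows cols by (intro CollectI conjI)
qed

lemma QT_inj: assumes nu: "nu \<in> Par" shows "inj_on (QT nu) (SST nu)"
proof
  fix T T' assume T: "T \<in> SST nu" and T': "T' \<in> SST nu" and eq: "QT nu T = QT nu T'"
  have sh: "shape nu zerop" using shape_SST[OF nu] .
  have s1: "T \<in> sst_skew nu zerop" "T' \<in> sst_skew nu zerop" using T T' unfolding SST_def by auto
  have "rowT nu zerop T j = rowT nu zerop T' j" for j
  proof (rule sorted_eq)
    show "sorted (rowT nu zerop T j)" "sorted (rowT nu zerop T' j)" using sst_rows[OF sh] s1 by auto
    show "\<forall>a. cnt a (rowT nu zerop T j) = cnt a (rowT nu zerop T' j)"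
      using eq unfolding QT_def by metis
  qed
  hence "rowT nu zerop T = rowT nu zerop T'" by blast
  thus "T = T'" using fill_rowT[OF sh s1(1)] fill_rowT[OF sh s1(2)] by metis
qed

lemma Mset_surj:
  assumes la: "la \<in> Par" and al: "al \<in> Par" and nu: "nu \<in> Par" and le: "\<forall>j. al j \<le> la j"
    and Q: "Q \<in> Mset la al nu"
  shows "\<exists>T\<in>CLR la al nu. QT nu T = Q"
proof -
  define B where "B = nrows la"
  define L where "L j = repl (Q j) B" for j
  define T where "T = fillL nu zerop L"
  have sh: "shape nu zerop" using shape_SST[OF nu] .
  have supp: "\<forall>j v. Q j v \<noteq> 0 \<longrightarrow> 1 \<le> j \<and> j \<le> nrows nu \<and> 1 \<le> v \<and> v \<le> nrows la"
    and rows: "\<forall>j. (\<Sum>v\<in>{1..nrows la}. Q j v) = nat (nu j)"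
    and cols: "\<forall>v. (\<Sum>j\<in>{1..nrows nu}. Q j v) = nat (la v) - nat (al v)"
    and ct: "CTq Q" and cs: "CSq al Q" using Q unfolding Mset_def by auto
  have len: "\<forall>r. length (L r) = nat (nu r) - nat (zerop r)"
    using rows unfolding L_def B_def length_repl by (simp add: zerop_def)
  have rw: "rowT nu zerop T j = L j" for j unfolding T_def using rowT_fill[OF sh] len by blast
  have cL: "cnt v (L j) = Q j v" for j v
    unfolding L_def cnt_repl B_def using supp by fastforce
  have QTe: "QT nu T = Q" unfolding QT_def rw cL by (simp add: fun_eq_iff)
  have z: "\<forall>r. 0 \<notin> set (L r)" using set_repl unfolding L_def by fastforce
  have srt: "\<forall>r. sorted (L r) \<and> (\<forall>x\<in>set (L r). 1 \<le> x)"
    using set_repl sorted_repl unfolding L_def by fastforce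
  have cc: "colcond zerop L" using colcond_zerop_iff[OF z] ct cL by simp
  have TS: "T \<in> SST nu" unfolding SST_def T_def using fill_sst_iff[OF sh len] srt cc by blast
  have ep: "le_lam (eps_vec nu T) al" using eps_iff[OF nu al TS] cs QTe by simp
  have wl: "\<forall>j. al j + wt nu T j = la j"
  proof
    fix v
    have "wt nu T v = int (\<Sum>j\<in>{1..nrows nu}. Q j v)" using wt_QT[of nu T v] QTe by (simp del: of_nat_sum)
    also have "\<dots> = int (nat (la v) - nat (al v))" using cols by (simp del: of_nat_sum)
    also have "\<dots> = la v - al v" using le[rule_format, of v] Par_nonneg[OF al, of v] by simp
    finally show "al v + wt nu T v = la v" by simp
  qed
  have "T \<in> CLR la al nu" unfolding CLR_def using TS ep wl by blast
  thus ?thesis using QTe by blast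
qed

lemma CLR_bij:
  assumes la: "la \<in> Par" and al: "al \<in> Par" and nu: "nu \<in> Par" and le: "\<forall>j. al j \<le> la j"
  shows "bij_betw (QT nu) (CLR la al nu) (Mset la al nu)"
  unfolding bij_betw_def
proof
  show "inj_on (QT nu) (CLR la al nu)"
    by (rule inj_on_subset[OF QT_inj[OF nu]]) (auto simp: CLR_def)
  show "QT nu ` CLR la al nu = Mset la al nu"
    using QT_in_Mset[OF la al nu le] Mset_surj[OF la al nu le] by blast
qed


definition QS :: "lam \<Rightarrow> lam \<Rightarrow> tab \<Rightarrow> nat \<Rightarrow> nat \<Rightarrow> nat" where
  "QS la al S j v = cnt j (rowT la al S v)"

definition LRset :: "lam \<Rightarrow> lam \<Rightarrow> lam \<Rightarrow> tab set" where
  "LRset la al nu = {S \<in> sst_skew la al. (\<forall>j\<ge>1. int (cnt j (rword la al S)) = nu j)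
                               \<and> lattice (rev (rword la al S))}"

lemma lrc_LRset: "\<forall>j. al j \<le> la j \<Longrightarrow> lrc la al nu = card (LRset la al nu)"
  unfolding lrc_def LRset_def by simp

lemma colcond_iff_CSq:
  assumes z: "\<forall>r. 0 \<notin> set (L r)"
  shows "colcond al L \<longleftrightarrow> CSq al (\<lambda>j v. cnt j (L v))"
proof -
  have e: "lecnt v (L r) = (\<Sum>a\<in>{1..v}. cnt a (L r))" for r v using lecnt_sum z by blast
  have e2: "lecnt (v - 1) (L r) = (\<Sum>a\<in>{1..<v}. cnt a (L r))" if v: "1 \<le> v" for r v
    using e[of "v - 1" r] sum_1_lt[OF v] by simp
  show ?thesis unfolding colcond_def CSq_def
  proof (intro iffI allI impI)
    fix r j :: nat assume h: "\<forall>r\<ge>1. \<forall>v\<ge>1. nat (al (Suc r)) + lecnt v (L (Suc r)) \<le> nat (al r) + lecnt (v - 1) (L r)"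
      and r: "1 \<le> r" and j: "1 \<le> j"
    have "nat (al (Suc r)) + lecnt j (L (Suc r)) \<le> nat (al r) + lecnt (j - 1) (L r)" using h r j by blast
    thus "nat (al (Suc r)) + (\<Sum>j'\<in>{1..j}. cnt j' (L (Suc r))) \<le> nat (al r) + (\<Sum>j'\<in>{1..<j}. cnt j' (L r))"
      using e[of j "Suc r"] e2[OF j, of r] by simp
  next
    fix r v :: nat assume h: "\<forall>r\<ge>1. \<forall>j\<ge>1. nat (al (Suc r)) + (\<Sum>j'\<in>{1..j}. cnt j' (L (Suc r))) \<le> nat (al r) + (\<Sum>j'\<in>{1..<j}. cnt j' (L r))"
      and r: "1 \<le> r" and v: "1 \<le> v"
    have "nat (al (Suc r)) + (\<Sum>j'\<in>{1..v}. cnt j' (L (Suc r))) \<le> nat (al r) + (\<Sum>j'\<in>{1..<v}. cnt j' (L r))"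
      using h r v by blast
    thus "nat (al (Suc r)) + lecnt v (L (Suc r)) \<le> nat (al r) + lecnt (v - 1) (L r)"
      using e[of v "Suc r"] e2[OF v, of r] by simp
  qed
qed

lemma lattice_iff_CTq:
  assumes srt: "\<forall>r. sorted (L r)" and zb: "\<forall>r>B. L r = []"
  shows "lattice (rev (concat (map L (rev [1..<B+1])))) \<longleftrightarrow> CTq (\<lambda>j v. cnt j (L v))"
proof -
  have srt': "\<forall>j\<in>{1..B}. sorted (L j)" using srt by blast
  have step: "SufOK j 0 (concat (map L (rev [1..<B+1]))) \<longleftrightarrow>
     (\<forall>v\<ge>1. int 0 + (\<Sum>v'\<in>{1..v}. int (cnt (Suc j) (L v'))) \<le> int 0 + (\<Sum>v'\<in>{1..<v}. int (cnt j (L v'))))" for j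
  proof -
    have "SufOK j 0 (concat (map L (rev [1..<B+1]))) \<longleftrightarrow>
       (\<forall>v\<in>{1..B}. int 0 + (\<Sum>v'\<in>{1..v}. int (cnt (Suc j) (L v'))) \<le> int 0 + (\<Sum>v'\<in>{1..<v}. int (cnt j (L v'))))"
      using suf_blocks[OF srt', of 0 j] by simp
    also have "\<dots> \<longleftrightarrow> (\<forall>v\<ge>1. int 0 + (\<Sum>v'\<in>{1..v}. int (cnt (Suc j) (L v'))) \<le> int 0 + (\<Sum>v'\<in>{1..<v}. int (cnt j (L v'))))"
      by (rule ext_range) (use zb in auto)
    finally show ?thesis .
  qed
  show ?thesis unfolding lattice_rev CTq_def
  proof (intro iffI allI impI)
    fix j v :: nat assume h: "\<forall>j\<ge>1. SufOK j 0 (concat (map L (rev [1..<B + 1])))" and j: "1 \<le> j" and v: "1 \<le> v"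
    have "int 0 + (\<Sum>v'\<in>{1..v}. int (cnt (Suc j) (L v'))) \<le> int 0 + (\<Sum>v'\<in>{1..<v}. int (cnt j (L v')))"
      using h j v step by blast
    thus "(\<Sum>v'\<in>{1..v}. cnt (Suc j) (L v')) \<le> (\<Sum>v'\<in>{1..<v}. cnt j (L v'))" by (simp del: of_nat_sum add: of_nat_sum[symmetric])
  next
    fix j :: nat assume h: "\<forall>j\<ge>1. \<forall>v\<ge>1. (\<Sum>v'\<in>{1..v}. cnt (Suc j) (L v')) \<le> (\<Sum>v'\<in>{1..<v}. cnt j (L v'))" and j: "1 \<le> j"
    have "\<forall>v\<ge>1. int 0 + (\<Sum>v'\<in>{1..v}. int (cnt (Suc j) (L v'))) \<le> int 0 + (\<Sum>v'\<in>{1..<v}. int (cnt j (L v')))"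
    proof (intro allI impI)
      fix v :: nat assume v: "1 \<le> v"
      have "(\<Sum>v'\<in>{1..v}. cnt (Suc j) (L v')) \<le> (\<Sum>v'\<in>{1..<v}. cnt j (L v'))" using h j v by blast
      thus "int 0 + (\<Sum>v'\<in>{1..v}. int (cnt (Suc j) (L v'))) \<le> int 0 + (\<Sum>v'\<in>{1..<v}. int (cnt j (L v')))"
        by (simp del: of_nat_sum add: of_nat_sum[symmetric])
    qed
    thus "SufOK j 0 (concat (map L (rev [1..<B + 1])))" using step by blast
  qed
qed

lemma QS_in_Mset:
  assumes la: "la \<in> Par" and al: "al \<in> Par" and nu: "nu \<in> Par" and le: "\<forall>j. al j \<le> la j"
    and S: "S \<in> LRset la al nu"
  shows "QS la al S \<in> Mset la al nu"
proof -
  have S': "S \<in> sst_skew la al" and ct: "\<forall>j\<ge>1. int (cnt j (rword la al S)) = nu j"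
    and lat: "lattice (rev (rword la al S))" using S unfolding LRset_def by auto
  have sh: "shape la al" unfolding shape_def using la al le by blast
  define R where "R = rowT la al S"
  define B where "B = nrows la"
  define N where "N = nrows nu"
  have Q: "QS la al S j v = cnt j (R v)" for j v unfolding QS_def R_def ..
  have pos: "\<forall>x\<in>set (R r). 1 \<le> x" for r using sst_rows[OF sh S'] unfolding R_def by blast
  have srt: "\<forall>r. sorted (R r)" using sst_rows[OF sh S'] unfolding R_def by blast
  have zb: "\<forall>r>B. R r = []" using rowT_zero_beyond[OF la] unfolding R_def B_def by blast
  have vr: "1 \<le> v \<and> v \<le> B" if "R v \<noteq> []" for v
  proof -
    have "\<not> (v = 0 \<or> B < v)" using rowT_zero_beyond[OF la, of v al S] that unfolding R_def B_def by blast
    thus ?thesis by linarith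
  qed
  have w: "rword la al S = concat (map R (rev [1..<B+1]))" unfolding R_def B_def by (rule rword_rowT)
  have cw: "cnt j (rword la al S) = (\<Sum>v\<in>{1..B}. QS la al S j v)" for j
    unfolding w cnt_concat_rows Q ..
  have setR: "set (R v) \<subseteq> {1..N}" for v
  proof
    fix x assume x: "x \<in> set (R v)"
    have x1: "1 \<le> x" using pos x by blast
    have "x \<le> N"
    proof (rule ccontr)
      assume "\<not> x \<le> N"
      hence nz: "nu x = 0" using nrows_zero[OF Par_Lam[OF nu]] unfolding N_def by simp
      have "cnt x (R v) \<noteq> 0" using x by (simp add: cnt_count)
      moreover have "v \<in> {1..B}" using vr x by force
      ultimately have "0 < (\<Sum>v\<in>{1..B}. QS la al S x v)" using Q by (intro sum_pos_elem) auto
      hence "0 < int (cnt x (rword la al S))" using cw[of x] by (simp del: of_nat_sum)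
      thus False using ct x1 nz by simp
    qed
    thus "x \<in> {1..N}" using x1 by simp
  qed
  have supp: "\<forall>j v. QS la al S j v \<noteq> 0 \<longrightarrow> 1 \<le> j \<and> j \<le> nrows nu \<and> 1 \<le> v \<and> v \<le> nrows la"
  proof (intro allI impI)
    fix j v assume "QS la al S j v \<noteq> 0"
    hence "cnt j (R v) \<noteq> 0" using Q by simp
    hence j: "j \<in> set (R v)" by (simp add: cnt_count)
    hence "R v \<noteq> []" by auto
    thus "1 \<le> j \<and> j \<le> nrows nu \<and> 1 \<le> v \<and> v \<le> nrows la" using vr setR[of v] j unfolding N_def B_def by auto
  qed
  have rows: "\<forall>j. (\<Sum>v\<in>{1..nrows la}. QS la al S j v) = nat (nu j)"
  proof
    fix j
    show "(\<Sum>v\<in>{1..nrows la}. QS la al S j v) = nat (nu j)"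
    proof (cases "j = 0")
      case True
      have "QS la al S 0 v = 0" for v using pos[of v] Q cnt_zero[of 0 "R v"] by fastforce
      moreover have "nu 0 = 0" using Lam_zero0[OF Par_Lam[OF nu]] .
      ultimately show ?thesis using True by simp
    next
      case False
      hence "1 \<le> j" by simp
      hence "int (\<Sum>v\<in>{1..B}. QS la al S j v) = nu j" using ct[rule_format, of j] cw[of j] by (simp del: of_nat_sum)
      thus ?thesis unfolding B_def by linarith
    qed
  qed
  have cols: "\<forall>v. (\<Sum>j\<in>{1..nrows nu}. QS la al S j v) = nat (la v) - nat (al v)"
  proof
    fix v
    have "length (R v) = nat (la v) - nat (al v)" unfolding R_def length_rowT ..
    thus "(\<Sum>j\<in>{1..nrows nu}. QS la al S j v) = nat (la v) - nat (al v)"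
      using len_sum[OF setR[of v]] Q unfolding N_def by simp
  qed
  have z: "\<forall>r. 0 \<notin> set (R r)" using pos by fastforce
  have "CTq (\<lambda>j v. cnt j (R v))" using lattice_iff_CTq[OF srt zb] lat w by simp
  hence c1: "CTq (QS la al S)" unfolding QS_def R_def by simp
  have len: "\<forall>r. length (R r) = nat (la r) - nat (al r)" unfolding R_def length_rowT by simp
  have "fillL la al R \<in> sst_skew la al" unfolding R_def using fill_rowT[OF sh S'] S' by simp
  hence "colcond al R" using fill_sst_iff[OF sh len] by blast
  hence "CSq al (\<lambda>j v. cnt j (R v))" using colcond_iff_CSq[OF z] by blast
  hence c2: "CSq al (QS la al S)" unfolding QS_def R_def by simp
  show ?thesis unfolding Mset_def using supp rows cols c1 c2 by (intro CollectI conjI)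
qed

lemma QS_inj: assumes sh: "shape la al" shows "inj_on (QS la al) (sst_skew la al)"
proof
  fix S S' assume s1: "S \<in> sst_skew la al" and s2: "S' \<in> sst_skew la al" and eq: "QS la al S = QS la al S'"
  have "rowT la al S v = rowT la al S' v" for v
  proof (rule sorted_eq)
    show "sorted (rowT la al S v)" "sorted (rowT la al S' v)" using sst_rows[OF sh] s1 s2 by auto
    show "\<forall>a. cnt a (rowT la al S v) = cnt a (rowT la al S' v)"
      using eq unfolding QS_def by metis
  qed
  hence "rowT la al S = rowT la al S'" by blast
  thus "S = S'" using fill_rowT[OF sh s1] fill_rowT[OF sh s2] by metis
qed

lemma Mset_surj_LR:
  assumes la: "la \<in> Par" and al: "al \<in> Par" and nu: "nu \<in> Par" and le: "\<forall>j. al j \<le> la j"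
    and Q: "Q \<in> Mset la al nu"
  shows "\<exists>S\<in>LRset la al nu. QS la al S = Q"
proof -
  define N where "N = nrows nu"
  define B where "B = nrows la"
  define L where "L v = repl (\<lambda>j. Q j v) N" for v
  define S where "S = fillL la al L"
  have sh: "shape la al" unfolding shape_def using la al le by blast
  have supp: "\<forall>j v. Q j v \<noteq> 0 \<longrightarrow> 1 \<le> j \<and> j \<le> nrows nu \<and> 1 \<le> v \<and> v \<le> nrows la"
    and rows: "\<forall>j. (\<Sum>v\<in>{1..nrows la}. Q j v) = nat (nu j)"
    and cols: "\<forall>v. (\<Sum>j\<in>{1..nrows nu}. Q j v) = nat (la v) - nat (al v)"
    and ct: "CTq Q" and cs: "CSq al Q" using Q unfolding Mset_def by auto
  have len: "\<forall>r. length (L r) = nat (la r) - nat (al r)"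
    using cols unfolding L_def N_def length_repl by simp
  have rw: "rowT la al S v = L v" for v unfolding S_def using rowT_fill[OF sh] len by blast
  have cL: "cnt j (L v) = Q j v" for j v
    unfolding L_def cnt_repl N_def using supp by fastforce
  have QSe: "QS la al S = Q" unfolding QS_def rw cL by (simp add: fun_eq_iff)
  have z: "\<forall>r. 0 \<notin> set (L r)" using set_repl unfolding L_def by fastforce
  have srt0: "\<forall>r. sorted (L r)" using sorted_repl unfolding L_def by blast
  have srt: "\<forall>r. sorted (L r) \<and> (\<forall>x\<in>set (L r). 1 \<le> x)"
    using set_repl sorted_repl unfolding L_def by fastforce
  have cc: "colcond al L" using colcond_iff_CSq[OF z] cs cL by simp
  have S': "S \<in> sst_skew la al" unfolding S_def using fill_sst_iff[OF sh len] srt cc by blast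
  have zb: "\<forall>r>B. L r = []"
  proof (intro allI impI)
    fix r assume "B < r"
    hence "nat (la r) = 0" using nrows_zero[OF Par_Lam[OF la]] unfolding B_def by simp
    thus "L r = []" using len[rule_format, of r] by simp
  qed
  have w: "rword la al S = concat (map L (rev [1..<B+1]))" unfolding B_def rword_rowT rw[abs_def] ..
  have lat: "lattice (rev (rword la al S))" unfolding w using lattice_iff_CTq[OF srt0 zb] ct cL by simp
  have ctt: "\<forall>j\<ge>1. int (cnt j (rword la al S)) = nu j"
  proof (intro allI impI)
    fix j :: nat assume "1 \<le> j"
    have "cnt j (rword la al S) = (\<Sum>v\<in>{1..B}. Q j v)" unfolding w cnt_concat_rows cL ..
    also have "\<dots> = nat (nu j)" using rows unfolding B_def by blast
    finally show "int (cnt j (rword la al S)) = nu j" using Par_nonneg[OF nu, of j] by simp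
  qed
  have "S \<in> LRset la al nu" unfolding LRset_def using S' ctt lat by blast
  thus ?thesis using QSe by blast
qed

lemma LR_bij:
  assumes la: "la \<in> Par" and al: "al \<in> Par" and nu: "nu \<in> Par" and le: "\<forall>j. al j \<le> la j"
  shows "bij_betw (QS la al) (LRset la al nu) (Mset la al nu)"
  unfolding bij_betw_def
proof
  have sh: "shape la al" unfolding shape_def using la al le by blast
  show "inj_on (QS la al) (LRset la al nu)"
    by (rule inj_on_subset[OF QS_inj[OF sh]]) (auto simp: LRset_def)
  show "QS la al ` LRset la al nu = Mset la al nu"
    using QS_in_Mset[OF la al nu le] Mset_surj_LR[OF la al nu le] by blast
qed

lemma CLR_nonempty_le: "T \<in> CLR la al nu \<Longrightarrow> al j \<le> la j"
  unfolding CLR_def wt_def by (metis (mono_tags, lifting) mem_Collect_eq le_add_same_cancel1 of_nat_0_le_iff)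

theorem card_CLR:
  assumes la: "la \<in> Par" and al: "al \<in> Par" and nu: "nu \<in> Par"
  shows "card (CLR la al nu) = lrc la al nu"
proof (cases "\<forall>j. al j \<le> la j")
  case True
  have "card (CLR la al nu) = card (Mset la al nu)" using CLR_bij[OF la al nu True] by (rule bij_betw_same_card)
  also have "\<dots> = card (LRset la al nu)" using LR_bij[OF la al nu True] by (rule bij_betw_same_card[symmetric])
  finally show ?thesis using lrc_LRset[OF True] by simp
next
  case False
  hence "CLR la al nu = {}" using CLR_nonempty_le by blast
  moreover have "lrc la al nu = 0" unfolding lrc_def using False by (rule if_not_P)
  ultimately show ?thesis by simp
qed


lemma psize_eq:
  assumes "x 0 = 0" "\<forall>j>M. x j = 0"
  shows "psize x = (\<Sum>j\<in>{1..M}. x j)"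
  unfolding psize_def
proof (rule sum.mono_neutral_left)
  show "finite {1..M}" by simp
  show "{j. x j \<noteq> 0} \<subseteq> {1..M}" using assms by (auto simp: not_less[symmetric]) (metis neq0_conv)
qed auto

lemma Lam_bound: "x \<in> Lam \<Longrightarrow> \<forall>j>nrows x. x j = 0"
  using nrows_zero by blast

lemma Par_le_psize:
  assumes p: "x \<in> Par" and j: "1 \<le> j"
  shows "x j \<le> psize x" "int j * x j \<le> psize x"
proof -
  define M where "M = max j (nrows x)"
  have ps: "psize x = (\<Sum>i\<in>{1..M}. x i)"
    using psize_eq[of x M] Lam_zero0[OF Par_Lam[OF p]] nrows_zero[OF Par_Lam[OF p]] unfolding M_def by auto
  have nn: "0 \<le> x i" for i using Par_nonneg[OF p] .
  have "(\<Sum>i\<in>{1..j}. x j) \<le> (\<Sum>i\<in>{1..j}. x i)"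
    by (rule sum_mono) (use Par_mono[OF p] in auto)
  also have "\<dots> \<le> (\<Sum>i\<in>{1..M}. x i)" by (rule sum_mono2) (use nn M_def in auto)
  finally show "int j * x j \<le> psize x" using ps by simp
  moreover have "x j \<le> int j * x j" using j nn[of j] by (simp add: mult_le_cancel_right1)
  ultimately show "x j \<le> psize x" by linarith
qed

lemma psize_nonneg: "x \<in> Par \<Longrightarrow> 0 \<le> psize x"
  unfolding psize_def using Par_nonneg by (simp add: sum_nonneg)

lemma finite_lam_bounded: "finite {x :: lam. \<forall>j. 0 \<le> x j \<and> x j \<le> int C \<and> (x j \<noteq> 0 \<longrightarrow> j \<le> N)}"
proof (rule finite_subset)
  let ?f = "\<lambda>g :: nat \<Rightarrow> int. \<lambda>j. if j \<le> N then g j else 0"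
  show "{x :: lam. \<forall>j. 0 \<le> x j \<and> x j \<le> int C \<and> (x j \<noteq> 0 \<longrightarrow> j \<le> N)} \<subseteq> ?f ` ({0..N} \<rightarrow>\<^sub>E {0..int C})"
  proof
    fix x :: lam assume x: "x \<in> {x. \<forall>j. 0 \<le> x j \<and> x j \<le> int C \<and> (x j \<noteq> 0 \<longrightarrow> j \<le> N)}"
    have "x = ?f (restrict x {0..N})" using x by (auto simp: fun_eq_iff)
    moreover have "restrict x {0..N} \<in> {0..N} \<rightarrow>\<^sub>E {0..int C}" using x by auto
    ultimately show "x \<in> ?f ` ({0..N} \<rightarrow>\<^sub>E {0..int C})" by blast
  qed
  show "finite (?f ` ({0..N} \<rightarrow>\<^sub>E {0..int C}))" by (intro finite_imageI finite_PiE) auto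
qed

lemma finite_Par_le: "finite {x \<in> Par. psize x \<le> int n}"
proof (rule finite_subset[OF _ finite_lam_bounded[of n n]])
  show "{x \<in> Par. psize x \<le> int n} \<subseteq> {x :: lam. \<forall>j. 0 \<le> x j \<and> x j \<le> int n \<and> (x j \<noteq> 0 \<longrightarrow> j \<le> n)}"
  proof
    fix x assume x: "x \<in> {x \<in> Par. psize x \<le> int n}"
    hence p: "x \<in> Par" and ps: "psize x \<le> int n" by auto
    have "0 \<le> x j \<and> x j \<le> int n \<and> (x j \<noteq> 0 \<longrightarrow> j \<le> n)" for j
    proof (cases "j = 0")
      case True thus ?thesis using Lam_zero0[OF Par_Lam[OF p]] by simp
    next
      case False
      hence j: "1 \<le> j" by simp
      have a: "0 \<le> x j" using Par_nonneg[OF p] .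
      have b: "x j \<le> int n" using Par_le_psize(1)[OF p j] ps by linarith
      have "j \<le> n" if "x j \<noteq> 0"
      proof -
        have "1 \<le> x j" using a that by linarith
        hence "int j \<le> int j * x j" by (simp add: mult_le_cancel_left1)
        thus ?thesis using Par_le_psize(2)[OF p j] ps by linarith
      qed
      thus ?thesis using a b by blast
    qed
    thus "x \<in> {x :: lam. \<forall>j. 0 \<le> x j \<and> x j \<le> int n \<and> (x j \<noteq> 0 \<longrightarrow> j \<le> n)}" by blast
  qed
qed


definition dropr :: "lam \<Rightarrow> lam" where "dropr x j = (if j = 0 then 0 else x (Suc j))"
definition addr :: "int \<Rightarrow> lam \<Rightarrow> lam" where
  "addr a x j = (if j = 0 then 0 else if j = 1 then a else x (j - 1))"

definition parts :: "nat \<Rightarrow> nat \<Rightarrow> lam set" where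
  "parts N s = {x \<in> Par. x 1 \<le> int N \<and> psize x = int s}"

lemma dropr_Par: assumes p: "x \<in> Par" shows "dropr x \<in> Par"
proof -
  have L: "x \<in> Lam" using Par_Lam[OF p] .
  have sub: "{j. dropr x j \<noteq> 0} \<subseteq> {..nrows x}"
  proof
    fix j assume "j \<in> {j. dropr x j \<noteq> 0}"
    hence "x (Suc j) \<noteq> 0" unfolding dropr_def by (auto split: if_splits)
    hence "\<not> nrows x < Suc j" using nrows_zero[OF L] by blast
    thus "j \<in> {..nrows x}" by simp
  qed
  have "finite {j. dropr x j \<noteq> 0}" using sub by (rule finite_subset) simp
  moreover have "dropr x 0 = 0" by (simp add: dropr_def)
  ultimately have "dropr x \<in> Lam" unfolding Lam_def by blast
  moreover have "\<forall>i\<ge>1. oc (dropr x) i \<ge> 0" using p unfolding Par_def oc_def dropr_def by auto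
  ultimately show ?thesis unfolding Par_def by blast
qed

lemma addr_Par: assumes p: "x \<in> Par" and a: "x 1 \<le> a" shows "addr a x \<in> Par"
proof -
  have L: "x \<in> Lam" using Par_Lam[OF p] .
  have sub: "{j. addr a x j \<noteq> 0} \<subseteq> {..Suc (nrows x)}"
  proof
    fix j assume j: "j \<in> {j. addr a x j \<noteq> 0}"
    show "j \<in> {..Suc (nrows x)}"
    proof (cases "j \<le> 1")
      case True thus ?thesis by simp
    next
      case False
      hence "x (j - 1) \<noteq> 0" using j unfolding addr_def by auto
      hence "\<not> nrows x < j - 1" using nrows_zero[OF L] by blast
      thus ?thesis by simp
    qed
  qed
  have "finite {j. addr a x j \<noteq> 0}" using sub by (rule finite_subset) simp
  moreover have "addr a x 0 = 0" by (simp add: addr_def)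
  ultimately have "addr a x \<in> Lam" unfolding Lam_def by blast
  moreover have "oc (addr a x) i \<ge> 0" if i: "i \<ge> 1" for i
  proof (cases "i = 1")
    case True thus ?thesis using a unfolding oc_def addr_def by simp
  next
    case False
    hence "oc (addr a x) i = oc x (i - 1)" unfolding oc_def addr_def using i by auto
    thus ?thesis using p False i unfolding Par_def by auto
  qed
  ultimately show ?thesis unfolding Par_def by blast
qed

lemma psize_dropr: assumes p: "x \<in> Par" shows "psize (dropr x) = psize x - x 1"
proof -
  define M where "M = nrows x"
  have L: "x \<in> Lam" using Par_Lam[OF p] .
  have z: "\<forall>j>M. x j = 0" using nrows_zero[OF L] unfolding M_def by blast
  have "psize x = (\<Sum>j\<in>{1..Suc M}. x j)" by (rule psize_eq) (use z Lam_zero0[OF L] in auto)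
  also have "\<dots> = x 1 + (\<Sum>j\<in>{Suc 1..Suc M}. x j)" by (simp add: sum.atLeast_Suc_atMost)
  also have "(\<Sum>j\<in>{Suc 1..Suc M}. x j) = (\<Sum>j\<in>{1..M}. x (Suc j))" by (rule sum.shift_bounds_cl_Suc_ivl)
  finally have a: "psize x = x 1 + (\<Sum>j\<in>{1..M}. x (Suc j))" .
  have "psize (dropr x) = (\<Sum>j\<in>{1..M}. dropr x j)" by (rule psize_eq) (use z in \<open>auto simp: dropr_def\<close>)
  also have "\<dots> = (\<Sum>j\<in>{1..M}. x (Suc j))" by (rule sum.cong) (auto simp: dropr_def)
  finally show ?thesis using a by simp
qed

lemma psize_addr: assumes L: "x \<in> Lam" shows "psize (addr a x) = psize x + a"
proof -
  define M where "M = nrows x"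
  have z: "\<forall>j>M. x j = 0" using nrows_zero[OF L] unfolding M_def by blast
  have "psize (addr a x) = (\<Sum>j\<in>{1..Suc M}. addr a x j)" by (rule psize_eq) (use z in \<open>auto simp: addr_def\<close>)
  also have "\<dots> = addr a x 1 + (\<Sum>j\<in>{Suc 1..Suc M}. addr a x j)" by (simp add: sum.atLeast_Suc_atMost)
  also have "(\<Sum>j\<in>{Suc 1..Suc M}. addr a x j) = (\<Sum>j\<in>{1..M}. addr a x (Suc j))" by (rule sum.shift_bounds_cl_Suc_ivl)
  also have "\<dots> = (\<Sum>j\<in>{1..M}. x j)" by (rule sum.cong) (auto simp: addr_def)
  also have "\<dots> = psize x" by (rule psize_eq[symmetric]) (use z Lam_zero0[OF L] in auto)
  finally have "psize (addr a x) = addr a x 1 + psize x" .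
  moreover have "addr a x 1 = a" by (simp add: addr_def)
  ultimately show ?thesis by simp
qed

lemma dropr_addr: "x \<in> Lam \<Longrightarrow> dropr (addr a x) = x"
  unfolding dropr_def addr_def using Lam_zero0 by (auto simp: fun_eq_iff)

lemma addr_dropr: "x \<in> Lam \<Longrightarrow> addr (x 1) (dropr x) = x"
  unfolding dropr_def addr_def using Lam_zero0 by (auto simp: fun_eq_iff)

lemma finite_parts: "finite (parts N s)"
  by (rule finite_subset[OF _ finite_Par_le[of s]]) (auto simp: parts_def)

lemma parts_0: "parts 0 s = (if s = 0 then {zerop} else {})"
proof -
  have "x = zerop" if p: "x \<in> Par" and x1: "x 1 \<le> 0" for x
  proof
    fix j show "x j = zerop j"
    proof (cases "j = 0")
      case True thus ?thesis using Lam_zero0[OF Par_Lam[OF p]] by (simp add: zerop_def)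
    next
      case False
      hence "x j \<le> x 1" using Par_mono[OF p, of 1 j] by simp
      thus ?thesis using x1 Par_nonneg[OF p, of j] by (simp add: zerop_def)
    qed
  qed
  hence z: "x \<in> parts 0 s \<Longrightarrow> x = zerop" for x unfolding parts_def by simp
  have pz: "psize zerop = 0" by (simp add: psize_def zerop_def)
  show ?thesis
  proof (cases "s = 0")
    case True
    have "zerop \<in> parts 0 s" unfolding parts_def using zerop_Par pz True by (simp add: zerop_def)
    hence "parts 0 s = {zerop}" using z by blast
    thus ?thesis using True by simp
  next
    case False
    have "parts 0 s = {}" using z pz False unfolding parts_def by fastforce
    thus ?thesis using False by simp
  qed
qed

lemma parts_split:
  assumes N: "1 \<le> N"
  shows "card (parts N s) = card (parts (N - 1) s) + (if N \<le> s then card (parts N (s - N)) else 0)"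
proof -
  define A where "A = {x \<in> Par. x 1 = int N \<and> psize x = int s}"
  have iN: "int (N - 1) = int N - 1" using N by simp
  have un: "parts N s = parts (N - 1) s \<union> A"
  proof (rule set_eqI)
    fix x :: lam
    have "x 1 \<le> int N \<longleftrightarrow> x 1 \<le> int (N - 1) \<or> x 1 = int N" using iN by linarith
    thus "x \<in> parts N s \<longleftrightarrow> x \<in> parts (N - 1) s \<union> A" unfolding parts_def A_def by blast
  qed
  have dis: "parts (N - 1) s \<inter> A = {}"
  proof -
    have "\<not> (x 1 \<le> int (N - 1) \<and> x 1 = int N)" for x :: lam using iN by linarith
    thus ?thesis unfolding parts_def A_def by blast
  qed
  have fA: "finite A" using un finite_parts[of N s] by (metis finite_Un)
  have cA: "card A = (if N \<le> s then card (parts N (s - N)) else 0)"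
  proof (cases "N \<le> s")
    case False
    have "A = {}"
    proof (rule ccontr)
      assume "A \<noteq> {}"
      then obtain x where x: "x \<in> Par" "x 1 = int N" "psize x = int s" unfolding A_def by auto
      thus False using Par_le_psize(1)[OF x(1), of 1] False by simp
    qed
    thus ?thesis using False by simp
  next
    case True
    have "bij_betw dropr A (parts N (s - N))" unfolding bij_betw_def
    proof
      show "inj_on dropr A"
      proof
        fix x y assume x: "x \<in> A" and y: "y \<in> A" and e: "dropr x = dropr y"
        have xL: "x \<in> Lam" "y \<in> Lam" using x y Par_Lam unfolding A_def by auto
        have "x = addr (x 1) (dropr x)" using addr_dropr[OF xL(1)] by simp
        also have "\<dots> = addr (y 1) (dropr y)" using x y e unfolding A_def by simp
        also have "\<dots> = y" using addr_dropr[OF xL(2)] by simp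
        finally show "x = y" .
      qed
      show "dropr ` A = parts N (s - N)"
      proof
        show "dropr ` A \<subseteq> parts N (s - N)"
        proof
          fix z assume "z \<in> dropr ` A"
          then obtain x where x: "x \<in> A" "z = dropr x" by blast
          have p: "x \<in> Par" and x1: "x 1 = int N" and ps: "psize x = int s" using x unfolding A_def by auto
          have "z \<in> Par" using dropr_Par[OF p] x by simp
          moreover have "z 1 \<le> int N" using Par_dec[OF p, of 1] x1 x(2) by (simp add: dropr_def)
          moreover have "psize z = int (s - N)" using psize_dropr[OF p] x(2) x1 ps True by simp
          ultimately show "z \<in> parts N (s - N)" unfolding parts_def by blast
        qed
        show "parts N (s - N) \<subseteq> dropr ` A"
        proof
          fix z assume z: "z \<in> parts N (s - N)"
          have p: "z \<in> Par" and z1: "z 1 \<le> int N" and ps: "psize z = int (s - N)" using z unfolding parts_def by auto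
          have "addr (int N) z \<in> A" unfolding A_def using addr_Par[OF p z1] psize_addr[OF Par_Lam[OF p]] ps True
            by (simp add: addr_def)
          moreover have "dropr (addr (int N) z) = z" using dropr_addr[OF Par_Lam[OF p]] .
          ultimately show "z \<in> dropr ` A" by (metis image_eqI)
        qed
      qed
    qed
    thus ?thesis using True by (simp add: bij_betw_same_card)
  qed
  have "card (parts N s) = card (parts (N - 1) s) + card A"
    unfolding un by (rule card_Un_disjoint) (use finite_parts fA dis in auto)
  thus ?thesis using cA by simp
qed


definition PN :: "nat \<Rightarrow> nat \<Rightarrow> int fps" where
  "PN k N = Abs_fps (\<lambda>t. if k dvd t then int (card (parts N (t div k))) else 0)"

definition Pall :: "nat \<Rightarrow> int fps" where
  "Pall k = Abs_fps (\<lambda>t. if k dvd t then int (card {x\<in>Par. psize x = int (t div k)}) else 0)"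

definition FF :: "nat \<Rightarrow> nat \<Rightarrow> int fps" where
  "FF k N = (\<Prod>a\<in>{1..N}. (1 - fps_X ^ (k * a)))"

lemma PN_rec:
  assumes k: "1 \<le> k" and N: "1 \<le> N"
  shows "PN k N = PN k (N - 1) + fps_X ^ (k * N) * PN k N"
proof (rule fps_ext)
  fix t
  show "fps_nth (PN k N) t = fps_nth (PN k (N - 1) + fps_X ^ (k * N) * PN k N) t"
  proof (cases "k dvd t")
    case True
    then obtain s where t: "t = k * s" by blast
    have ts: "t div k = s" using t k by simp
    show ?thesis
    proof (cases "t < k * N")
      case True
      have "\<not> N \<le> s"
      proof
        assume "N \<le> s" hence "k * N \<le> k * s" by (rule mult_le_mono2)
        thus False using True t by simp
      qed
      thus ?thesis using True parts_split[OF N, of s] ts \<open>k dvd t\<close> unfolding PN_def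
        by (simp add: fps_X_power_mult_nth)
    next
      case False
      hence Ns: "N \<le> s" using t k by (simp add: not_less mult_le_cancel1)
      have "t - k * N = k * (s - N)" using t by (simp add: diff_mult_distrib2)
      hence d: "k dvd (t - k * N)" "(t - k * N) div k = s - N" using k by auto
      show ?thesis using False parts_split[OF N, of s] ts \<open>k dvd t\<close> d Ns unfolding PN_def
        by (simp add: fps_X_power_mult_nth)
    qed
  next
    case False
    have "\<not> k dvd (t - k * N)" if "\<not> t < k * N"
    proof
      assume "k dvd (t - k * N)"
      hence "k dvd (t - k * N + k * N)" by simp
      thus False using False that by simp
    qed
    thus ?thesis using False unfolding PN_def by (simp add: fps_X_power_mult_nth)
  qed
qed

lemma PN_0: assumes k: "1 \<le> k" shows "PN k 0 = 1"
proof (rule fps_ext)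
  fix t
  show "fps_nth (PN k 0) t = fps_nth 1 t"
  proof (cases "k dvd t")
    case True
    then obtain s where t: "t = k * s" by blast
    have "t div k = s" using t k by simp
    moreover have "s = 0 \<longleftrightarrow> t = 0" using t k by simp
    ultimately show ?thesis using True unfolding PN_def parts_0 by simp
  next
    case False
    hence "t \<noteq> 0" by (metis dvd_0_right)
    thus ?thesis using False unfolding PN_def by simp
  qed
qed

lemma FF_PN: assumes k: "1 \<le> k" shows "FF k N * PN k N = 1"
proof (induction N)
  case 0 thus ?case using PN_0[OF k] by (simp add: FF_def)
next
  case (Suc N)
  have "FF k (Suc N) = FF k N * (1 - fps_X ^ (k * Suc N))"
    unfolding FF_def by (simp add: atLeastAtMostSuc_conv mult.commute)
  moreover have "(1 - fps_X ^ (k * Suc N)) * PN k (Suc N) = PN k N"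
    using PN_rec[OF k, of "Suc N"] by (simp add: algebra_simps)
  ultimately show ?case using Suc by (simp add: mult.assoc)
qed

lemma PN_Pall: assumes k: "1 \<le> k" and t: "t \<le> N" shows "fps_nth (PN k N) t = fps_nth (Pall k) t"
proof -
  have s: "t div k \<le> N" using t k by (meson div_le_dividend le_trans)
  have "parts N (t div k) = {x\<in>Par. psize x = int (t div k)}"
  proof (rule set_eqI)
    fix x :: lam
    have "x \<in> Par \<Longrightarrow> psize x = int (t div k) \<Longrightarrow> x 1 \<le> int N"
      using Par_le_psize(1)[of x 1] s by simp
    thus "x \<in> parts N (t div k) \<longleftrightarrow> x \<in> {x\<in>Par. psize x = int (t div k)}" unfolding parts_def by blast
  qed
  thus ?thesis unfolding PN_def Pall_def by simp
qed

lemma mult_one_minus_X_nth: "i < m \<Longrightarrow> fps_nth (f * (1 - fps_X ^ m)) i = fps_nth (f :: int fps) i"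
proof -
  assume i: "i < m"
  have "f * (1 - fps_X ^ m) = f - fps_X ^ m * f" by (simp add: algebra_simps)
  thus ?thesis using i by (simp add: fps_X_power_mult_nth)
qed

lemma euler_FF: assumes k: "1 \<le> k" and i: "i \<le> N" shows "fps_nth (euler_factor k) i = fps_nth (FF k N) i"
  using i
proof (induction N rule: dec_induct)
  case base thus ?case unfolding euler_factor_def FF_def by simp
next
  case (step N)
  have "FF k (Suc N) = FF k N * (1 - fps_X ^ (k * Suc N))"
    unfolding FF_def by (simp add: atLeastAtMostSuc_conv mult.commute)
  moreover have "i < k * Suc N" using step k by (metis le_imp_less_Suc less_le_trans mult_le_mono1 mult_1)
  ultimately show ?case using step mult_one_minus_X_nth by simp
qed

lemma euler_Pall: assumes k: "1 \<le> k" shows "euler_factor k * Pall k = 1"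
proof (rule fps_ext)
  fix n
  have "fps_nth (euler_factor k * Pall k) n = (\<Sum>i=0..n. fps_nth (euler_factor k) i * fps_nth (Pall k) (n - i))"
    by (rule fps_mult_nth)
  also have "\<dots> = (\<Sum>i=0..n. fps_nth (FF k n) i * fps_nth (PN k n) (n - i))"
    by (rule sum.cong) (use euler_FF[OF k] PN_Pall[OF k] in auto)
  also have "\<dots> = fps_nth (FF k n * PN k n) n" by (rule fps_mult_nth[symmetric])
  finally show "fps_nth (euler_factor k * Pall k) n = fps_nth 1 n" using FF_PN[OF k] by simp
qed


definition fs :: "lam \<Rightarrow> bool" where "fs f \<longleftrightarrow> finite {j. f j \<noteq> 0}"

lemma fs_add: "fs f \<Longrightarrow> fs g \<Longrightarrow> fs (\<lambda>j. f j + g j)"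
  unfolding fs_def by (rule finite_subset[of _ "{j. f j \<noteq> 0} \<union> {j. g j \<noteq> 0}"]) auto

lemma fs_diff: "fs f \<Longrightarrow> fs g \<Longrightarrow> fs (\<lambda>j. f j - g j)"
  unfolding fs_def by (rule finite_subset[of _ "{j. f j \<noteq> 0} \<union> {j. g j \<noteq> 0}"]) auto

lemma fs_sum: "finite A \<Longrightarrow> (\<forall>m\<in>A. fs (F m)) \<Longrightarrow> fs (\<lambda>j. \<Sum>m\<in>A. F m j)"
proof (induction A rule: finite_induct)
  case empty thus ?case by (simp add: fs_def)
next
  case (insert x A)
  have "fs (\<lambda>j. F x j + (\<Sum>m\<in>A. F m j))" using insert by (intro fs_add) auto
  thus ?case using insert by simp
qed

lemma Lam_iff_fs: "x \<in> Lam \<longleftrightarrow> x 0 = 0 \<and> fs x" unfolding Lam_def fs_def by simp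

lemma fs_bound: "fs f \<Longrightarrow> \<exists>M. \<forall>j>M. f j = 0"
proof -
  assume "fs f"
  hence fin: "finite {j. f j \<noteq> 0}" unfolding fs_def .
  have "\<forall>j>Max (insert 0 {j. f j \<noteq> 0}). f j = 0"
  proof (intro allI impI)
    fix j assume j: "Max (insert 0 {j. f j \<noteq> 0}) < j"
    show "f j = 0"
    proof (rule ccontr)
      assume "f j \<noteq> 0"
      hence "j \<le> Max (insert 0 {j. f j \<noteq> 0})" using fin by (intro Max_ge) auto
      thus False using j by simp
    qed
  qed
  thus ?thesis by blast
qed

lemma fs_from_bound: "\<forall>j>M. f j = 0 \<Longrightarrow> fs f"
  unfolding fs_def by (rule finite_subset[of _ "{..M}"]) (auto simp: not_less[symmetric])

lemma fs_wt: "fs (wt nu T)"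
proof -
  have "{j. wt nu T j \<noteq> 0} \<subseteq> set (rword nu zerop T)"
  proof
    fix j assume "j \<in> {j. wt nu T j \<noteq> 0}"
    hence "cnt j (rword nu zerop T) \<noteq> 0" unfolding wt_def by simp
    thus "j \<in> set (rword nu zerop T)" by (simp add: cnt_count)
  qed
  thus ?thesis unfolding fs_def by (rule finite_subset) simp
qed

lemma wt_0: "T \<in> SST nu \<Longrightarrow> nu \<in> Par \<Longrightarrow> wt nu T 0 = 0"
proof -
  assume T: "T \<in> SST nu" and nu: "nu \<in> Par"
  have sh: "shape nu zerop" by (rule shape_SST[OF nu])
  have "0 \<notin> set (rowT nu zerop T r)" for r using sst_rows[OF sh, of T r] T unfolding SST_def by auto
  hence "0 \<notin> set (rword nu zerop T)" unfolding rword_rowT by auto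
  hence "cnt 0 (rword nu zerop T) = 0" by (rule cnt_zero)
  thus ?thesis unfolding wt_def by simp
qed

lemma fs_eps: "fs (eps_vec nu T)"
proof -
  define w where "w = rword nu zerop T"
  define c where "c = (\<lambda>i. if i = 0 then 0 else int (epsi nu i T))"
  have "\<forall>i\<ge>Suc (Max (insert 0 (set w))). c i = 0"
  proof (intro allI impI)
    fix i assume i: "Suc (Max (insert 0 (set w))) \<le> i"
    show "c i = 0"
    proof (rule ccontr)
      assume "c i \<noteq> 0"
      hence "0 < fmax i w" unfolding c_def w_def epsi_fmax by (auto split: if_splits)
      hence "Suc i \<in> set w" by (rule fmax_pos_mem)
      hence "Suc i \<le> Max (insert 0 (set w))" by (intro Max_ge) auto
      thus False using i by simp
    qed
  qed
  hence "\<forall>j>Suc (Max (insert 0 (set w))). eps_vec nu T j = 0"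
    unfolding eps_vec_def c_def[symmetric] using from_omega_zero_beyond by (metis less_imp_le)
  thus ?thesis by (rule fs_from_bound)
qed

lemma eps_0: "eps_vec nu T 0 = 0" unfolding eps_vec_def by simp

lemma phi_nonneg: "1 \<le> i \<Longrightarrow> 0 \<le> int (epsi nu i T) + oc (wt nu T) i"
proof -
  assume i: "1 \<le> i"
  define w where "w = rword nu zerop T"
  have "gs i w 0 \<le> fmax i w" by (rule gs_le_fmax) simp
  moreover have "gs i w 0 = wt nu T (Suc i) - wt nu T i" unfolding gs_def w_def wt_def by simp
  moreover have "int (epsi nu i T) = fmax i w" unfolding epsi_fmax w_def using fmax_ge0 by simp
  ultimately show ?thesis unfolding oc_def by simp
qed

lemma oc_eps_vec: "1 \<le> i \<Longrightarrow> oc (eps_vec nu T) i = int (epsi nu i T)" by (rule oc_eps)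

lemma psize_add:
  assumes x: "x \<in> Lam" and y: "y \<in> Lam"
  shows "psize (\<lambda>j. x j + y j) = psize x + psize y"
proof -
  define M where "M = max (nrows x) (nrows y)"
  have zx: "\<forall>j>M. x j = 0" and zy: "\<forall>j>M. y j = 0" using nrows_zero[OF x] nrows_zero[OF y] unfolding M_def by auto
  have "psize (\<lambda>j. x j + y j) = (\<Sum>j\<in>{1..M}. x j + y j)" by (rule psize_eq) (use zx zy Lam_zero0[OF x] Lam_zero0[OF y] in auto)
  also have "\<dots> = (\<Sum>j\<in>{1..M}. x j) + (\<Sum>j\<in>{1..M}. y j)" by (rule sum.distrib)
  also have "\<dots> = psize x + psize y"
    using psize_eq[of x M] psize_eq[of y M] zx zy Lam_zero0[OF x] Lam_zero0[OF y] by simp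
  finally show ?thesis .
qed

lemma psize_mono:
  assumes x: "x \<in> Par" and y: "y \<in> Lam" and le: "\<forall>j. x j \<le> y j"
  shows "psize x \<le> psize y"
proof -
  define M where "M = max (nrows x) (nrows y)"
  have zx: "\<forall>j>M. x j = 0" and zy: "\<forall>j>M. y j = 0" using nrows_zero[OF Par_Lam[OF x]] nrows_zero[OF y] unfolding M_def by auto
  have "psize x = (\<Sum>j\<in>{1..M}. x j)" by (rule psize_eq) (use zx Lam_zero0[OF Par_Lam[OF x]] in auto)
  also have "\<dots> \<le> (\<Sum>j\<in>{1..M}. y j)" by (rule sum_mono) (use le in auto)
  also have "\<dots> = psize y" by (rule psize_eq[symmetric]) (use zy Lam_zero0[OF y] in auto)
  finally show ?thesis .
qed


locale setting =
  fixes k :: nat and nup num :: "nat \<Rightarrow> lam"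
  assumes k1: "1 \<le> k" and pars: "\<forall>i\<in>{1..k}. nup i \<in> Par \<and> num i \<in> Par"
begin

definition good :: "ttup \<Rightarrow> bool" where
  "good T \<longleftrightarrow> (\<forall>i\<in>{1..k}. fst T i \<in> SST (nup i) \<and> snd T i \<in> SST (num i)) \<and>
     (\<forall>i. i \<notin> {1..k} \<longrightarrow> fst T i = ztab \<and> snd T i = ztab) \<and>
     (\<forall>j. (\<Sum>i\<in>{1..k}. wtT nup num T i j) = 0)"

definition cum :: "ttup \<Rightarrow> nat \<Rightarrow> lam" where
  "cum T i j = (\<Sum>m\<in>{2..i}. wtT nup num T m j)"

definition cf :: "ttup \<Rightarrow> nat \<Rightarrow> int" where
  "cf T x = Max ((\<lambda>m. oc (Splus nup num T m) x) ` {1..k} \<union> (\<lambda>m. oc (Sminus nup num T m) x) ` {1..k})"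

lemma lmin_cf: "lmin k nup num T = from_omega (cf T)"
  unfolding lmin_def cf_def ..

definition LT :: "ttup \<Rightarrow> lam \<Rightarrow> nat \<Rightarrow> lam" where
  "LT T mu i = (if i \<in> {1..k} then (\<lambda>j. lamT k nup num T i j + mu j) else zerop)"

definition AT :: "ttup \<Rightarrow> lam \<Rightarrow> nat \<Rightarrow> lam" where
  "AT T mu i = (if i \<in> {1..k} then (\<lambda>j. LT T mu i j - wt (nup i) (fst T i) j) else zerop)"

lemma Sp_eq: "Splus nup num T i j = eps_vec (nup i) (fst T i) j + wt (nup i) (fst T i) j - cum T i j"
  unfolding Splus_def cum_def ..
lemma Sm_eq: "Sminus nup num T i j = eps_vec (num i) (snd T i) j + wt (nup i) (fst T i) j - cum T i j"
  unfolding Sminus_def cum_def ..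
lemma lamT_eq: "lamT k nup num T i j = lmin k nup num T j + cum T i j"
  unfolding lamT_def cum_def ..

lemma fs_wtT: "fs (wtT nup num T i)"
  unfolding wtT_def using fs_diff[OF fs_wt fs_wt] by simp

lemma fs_cum: "fs (cum T i)"
  unfolding cum_def[abs_def] by (rule fs_sum) (auto intro: fs_wtT)

lemma fs_Sp: "fs (Splus nup num T i)"
proof -
  have "fs (\<lambda>j. eps_vec (nup i) (fst T i) j + wt (nup i) (fst T i) j - cum T i j)"
    by (intro fs_diff fs_add fs_eps fs_wt fs_cum)
  thus ?thesis unfolding Sp_eq[abs_def] .
qed

lemma fs_Sm: "fs (Sminus nup num T i)"
proof -
  have "fs (\<lambda>j. eps_vec (num i) (snd T i) j + wt (nup i) (fst T i) j - cum T i j)"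
    by (intro fs_diff fs_add fs_eps fs_wt fs_cum)
  thus ?thesis unfolding Sm_eq[abs_def] .
qed

lemma fs_abs: "fs f \<Longrightarrow> fs (\<lambda>j. \<bar>f j\<bar>)" unfolding fs_def by simp

lemma cf_bound: "\<exists>M. \<forall>x>M. cf T x = 0"
proof -
  define G where "G j = (\<Sum>m\<in>{1..k}. \<bar>Splus nup num T m j\<bar> + \<bar>Sminus nup num T m j\<bar>)" for j
  have "fs G" unfolding G_def[abs_def] by (rule fs_sum) (auto intro!: fs_add fs_abs fs_Sp fs_Sm)
  then obtain M where M: "\<forall>j>M. G j = 0" using fs_bound by blast
  have z: "Splus nup num T m j = 0 \<and> Sminus nup num T m j = 0" if "m \<in> {1..k}" "j > M" for m j
  proof -
    have "G j = 0" using M that by blast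
    hence "\<forall>m\<in>{1..k}. \<bar>Splus nup num T m j\<bar> + \<bar>Sminus nup num T m j\<bar> = 0"
      unfolding G_def by (subst (asm) sum_nonneg_eq_0_iff) auto
    hence "\<bar>Splus nup num T m j\<bar> + \<bar>Sminus nup num T m j\<bar> = 0" using that(1) by blast
    thus ?thesis by linarith
  qed
  have "cf T x = 0" if x: "x > M" for x
  proof -
    have "(\<lambda>m. oc (Splus nup num T m) x) ` {1..k} \<union> (\<lambda>m. oc (Sminus nup num T m) x) ` {1..k} = {0}"
      using z x k1 unfolding oc_def by force
    thus ?thesis unfolding cf_def by simp
  qed
  thus ?thesis by blast
qed

lemma fs_cf: "finite {x. cf T x \<noteq> 0}"
  using cf_bound[of T] fs_from_bound unfolding fs_def by blast

lemma oc_lmin: "1 \<le> x \<Longrightarrow> oc (lmin k nup num T) x = cf T x"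
  unfolding lmin_cf by (rule oc_from_omega[OF fs_cf])

lemma lmin_Lam: "lmin k nup num T \<in> Lam"
proof -
  obtain M where M: "\<forall>x>M. cf T x = 0" using cf_bound by blast
  have "\<forall>j>Suc M. lmin k nup num T j = 0" unfolding lmin_cf
    using from_omega_zero_beyond[of "Suc M" "cf T"] M by auto
  hence "fs (lmin k nup num T)" by (rule fs_from_bound)
  thus ?thesis unfolding Lam_iff_fs lmin_cf by simp
qed

lemma cf_ge: "m \<in> {1..k} \<Longrightarrow> oc (Splus nup num T m) x \<le> cf T x \<and> oc (Sminus nup num T m) x \<le> cf T x"
  unfolding cf_def by (intro conjI Max_ge) auto

lemma cf_le: "(\<forall>m\<in>{1..k}. oc (Splus nup num T m) x \<le> B \<and> oc (Sminus nup num T m) x \<le> B) \<Longrightarrow> cf T x \<le> B"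
  unfolding cf_def using k1 by (intro Max.boundedI) auto

lemma uCLR_mem: "T \<in> uCLR k l a nup num \<longleftrightarrow>
   (\<forall>i\<in>{1..k}. fst T i \<in> CLR (l i) (a i) (nup i) \<and> snd T i \<in> CLR (l (prev k i)) (a i) (num i)) \<and>
   (\<forall>i. i \<notin> {1..k} \<longrightarrow> fst T i = ztab \<and> snd T i = ztab)"
  by (cases T) (simp add: uCLR_def)

lemma cum_1: "cum T 1 j = 0" unfolding cum_def by simp

lemma cum_Suc: "1 \<le> i \<Longrightarrow> cum T (Suc i) j = cum T i j + wtT nup num T (Suc i) j"
proof -
  assume i: "1 \<le> i"
  have "{2..Suc i} = insert (Suc i) {2..i}" using i by auto
  thus ?thesis unfolding cum_def by simp
qed

lemma sum_W_cum: "(\<Sum>i\<in>{1..k}. wtT nup num T i j) = wtT nup num T 1 j + cum T k j"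
proof -
  have "{1..k} = insert 1 {2..k}" using k1 by auto
  thus ?thesis unfolding cum_def by simp
qed

lemma prev_Suc: "prev k (Suc i) = i" if "1 \<le> i" using that unfolding prev_def by simp
lemma prev_1: "prev k 1 = k" unfolding prev_def by simp

lemma fwd:
  assumes T: "T \<in> uCLR k l a nup num"
  shows "good T"
    and "\<forall>i\<in>{1..k}. \<forall>j. l i j = l 1 j + cum T i j"
    and "\<forall>i\<in>{1..k}. \<forall>j. a i j = l i j - wt (nup i) (fst T i) j"
    and "\<forall>i\<in>{1..k}. \<forall>x\<ge>1. oc (Splus nup num T i) x \<le> oc (l 1) x \<and> oc (Sminus nup num T i) x \<le> oc (l 1) x"
proof -
  have C: "\<forall>i\<in>{1..k}. fst T i \<in> CLR (l i) (a i) (nup i) \<and> snd T i \<in> CLR (l (prev k i)) (a i) (num i)"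
    and O: "\<forall>i. i \<notin> {1..k} \<longrightarrow> fst T i = ztab \<and> snd T i = ztab" using T uCLR_mem by auto
  have C1: "fst T i \<in> SST (nup i)" "le_lam (eps_vec (nup i) (fst T i)) (a i)"
      "\<forall>j. a i j + wt (nup i) (fst T i) j = l i j" if "i \<in> {1..k}" for i
    using C that unfolding CLR_def by auto
  have C2: "snd T i \<in> SST (num i)" "le_lam (eps_vec (num i) (snd T i)) (a i)"
      "\<forall>j. a i j + wt (num i) (snd T i) j = l (prev k i) j" if "i \<in> {1..k}" for i
    using C that unfolding CLR_def by auto
  have W: "wtT nup num T i j = l i j - l (prev k i) j" if "i \<in> {1..k}" for i j
    using C1(3)[OF that] C2(3)[OF that] unfolding wtT_def by (metis add_diff_cancel_left)
  have ii: "\<forall>j. l i j = l 1 j + cum T i j" if "i \<in> {1..k}" for i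
    using that
  proof (induction i)
    case 0 thus ?case by simp
  next
    case (Suc i)
    show ?case
    proof (cases "i = 0")
      case True thus ?thesis by (simp add: cum_def)
    next
      case False
      hence i1: "1 \<le> i" and ik: "i \<in> {1..k}" using Suc.prems by auto
      have "\<forall>j. l (Suc i) j = l i j + wtT nup num T (Suc i) j" using W[OF Suc.prems] prev_Suc[OF i1] by simp
      thus ?thesis using Suc.IH[OF ik] cum_Suc[OF i1] by simp
    qed
  qed
  show "\<forall>i\<in>{1..k}. \<forall>j. l i j = l 1 j + cum T i j" using ii by blast
  have "\<forall>j. (\<Sum>i\<in>{1..k}. wtT nup num T i j) = 0"
  proof
    fix j
    have k': "k \<in> {1..k}" "1 \<in> {1..k}" using k1 by auto
    show "(\<Sum>i\<in>{1..k}. wtT nup num T i j) = 0"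
      unfolding sum_W_cum using W[OF k'(2), of j] ii[OF k'(1)] prev_1 by simp
  qed
  thus "good T" unfolding good_def using C1(1) C2(1) O by blast
  show "\<forall>i\<in>{1..k}. \<forall>j. a i j = l i j - wt (nup i) (fst T i) j" using C1(3) by (metis eq_diff_eq)
  show "\<forall>i\<in>{1..k}. \<forall>x\<ge>1. oc (Splus nup num T i) x \<le> oc (l 1) x \<and> oc (Sminus nup num T i) x \<le> oc (l 1) x"
  proof (intro ballI allI impI)
    fix i x assume i: "i \<in> {1..k}" and x: "1 \<le> (x::nat)"
    have e1: "oc (eps_vec (nup i) (fst T i)) x \<le> oc (a i) x" and e2: "oc (eps_vec (num i) (snd T i)) x \<le> oc (a i) x"
      using C1(2)[OF i] C2(2)[OF i] x unfolding le_lam_def by auto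
    have av: "a i y = l 1 y + cum T i y - wt (nup i) (fst T i) y" for y
      using C1(3)[OF i] ii[OF i] by (metis eq_diff_eq)
    show "oc (Splus nup num T i) x \<le> oc (l 1) x \<and> oc (Sminus nup num T i) x \<le> oc (l 1) x"
      using e1 e2 unfolding oc_def Sp_eq Sm_eq av by linarith
  qed
qed

lemma good_SST: "good T \<Longrightarrow> i \<in> {1..k} \<Longrightarrow> fst T i \<in> SST (nup i) \<and> snd T i \<in> SST (num i)"
  unfolding good_def by blast

lemma good_wt0: "good T \<Longrightarrow> i \<in> {1..k} \<Longrightarrow> wt (nup i) (fst T i) 0 = 0 \<and> wt (num i) (snd T i) 0 = 0"
  using good_SST wt_0 pars by blast

lemma cum_0: "good T \<Longrightarrow> i \<le> k \<Longrightarrow> cum T i 0 = 0"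
  unfolding cum_def wtT_def using good_wt0 by (intro sum.neutral) auto

lemma lamT_Lam: "good T \<Longrightarrow> i \<in> {1..k} \<Longrightarrow> lamT k nup num T i \<in> Lam"
proof -
  assume g: "good T" and i: "i \<in> {1..k}"
  have l: "lmin k nup num T \<in> Lam" by (rule lmin_Lam)
  have "fs (\<lambda>j. lmin k nup num T j + cum T i j)" using l fs_cum unfolding Lam_iff_fs by (intro fs_add) auto
  moreover have "lmin k nup num T 0 + cum T i 0 = 0" using l cum_0[OF g] i unfolding Lam_iff_fs by auto
  ultimately show ?thesis unfolding Lam_iff_fs lamT_eq by simp
qed

lemma bwd:
  assumes g: "good T" and mu: "mu \<in> Par"
  shows "LT T mu \<in> Ptup k" "AT T mu \<in> Ptup k" "T \<in> uCLR k (LT T mu) (AT T mu) nup num"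
proof -
  have Ll: "\<And>i j. i \<in> {1..k} \<Longrightarrow> LT T mu i j = lmin k nup num T j + cum T i j + mu j"
    unfolding LT_def lamT_eq by simp
  have Al: "\<And>i j. i \<in> {1..k} \<Longrightarrow> AT T mu i j = lmin k nup num T j + cum T i j + mu j - wt (nup i) (fst T i) j"
    unfolding AT_def LT_def lamT_eq by simp
  have muL: "mu \<in> Lam" using Par_Lam[OF mu] .
  have ocmu: "x \<ge> 1 \<Longrightarrow> 0 \<le> oc mu x" for x using mu unfolding Par_def by auto
  have lL: "lmin k nup num T \<in> Lam" by (rule lmin_Lam)
  have ocA: "oc (AT T mu i) x = cf T x + oc (cum T i) x + oc mu x - oc (wt (nup i) (fst T i)) x"
    if i: "i \<in> {1..k}" and x: "1 \<le> x" for i x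
    using oc_lmin[OF x, of T] unfolding oc_def Al[OF i] by simp
  have a1: "oc (eps_vec (nup i) (fst T i)) x \<le> oc (AT T mu i) x \<and> oc (eps_vec (num i) (snd T i)) x \<le> oc (AT T mu i) x"
    if i: "i \<in> {1..k}" and x: "1 \<le> x" for i x
  proof -
    have "oc (Splus nup num T i) x \<le> cf T x" "oc (Sminus nup num T i) x \<le> cf T x" using cf_ge[OF i] by auto
    thus ?thesis using ocA[OF i x] ocmu[OF x] unfolding oc_def Sp_eq Sm_eq by linarith
  qed
  have Apar: "AT T mu i \<in> Par" if i: "i \<in> {1..k}" for i
  proof -
    have "fs (\<lambda>j. lmin k nup num T j + cum T i j + mu j - wt (nup i) (fst T i) j)"
      using lL muL unfolding Lam_iff_fs by (intro fs_diff fs_add fs_cum fs_wt) auto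
    moreover have "AT T mu i 0 = 0" unfolding Al[OF i] using lL muL cum_0[OF g] good_wt0[OF g i] i
      unfolding Lam_iff_fs by auto
    ultimately have "AT T mu i \<in> Lam" unfolding Lam_iff_fs Al[OF i] by simp
    moreover have "\<forall>x\<ge>1. 0 \<le> oc (AT T mu i) x"
      using a1[OF i] oc_eps_vec by (metis of_nat_0_le_iff order_trans)
    ultimately show ?thesis unfolding Par_def by auto
  qed
  have Lpar: "LT T mu i \<in> Par" if i: "i \<in> {1..k}" for i
  proof -
    have e: "LT T mu i = (\<lambda>j. AT T mu i j + wt (nup i) (fst T i) j)" using Al[OF i] Ll[OF i] by (simp add: fun_eq_iff)
    have "AT T mu i \<in> Lam" using Apar[OF i] Par_Lam by blast
    hence "fs (\<lambda>j. AT T mu i j + wt (nup i) (fst T i) j)" unfolding Lam_iff_fs by (intro fs_add fs_wt) auto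
    moreover have "AT T mu i 0 + wt (nup i) (fst T i) 0 = 0" using Apar[OF i] Par_Lam Lam_zero0 good_wt0[OF g i] by fastforce
    ultimately have "LT T mu i \<in> Lam" unfolding e Lam_iff_fs by simp
    moreover have "0 \<le> oc (LT T mu i) x" if x: "1 \<le> x" for x
    proof -
      have "oc (LT T mu i) x = oc (AT T mu i) x + oc (wt (nup i) (fst T i)) x" unfolding e oc_def by simp
      moreover have "int (epsi (nup i) x (fst T i)) \<le> oc (AT T mu i) x" using a1[OF i x] oc_eps_vec[OF x] by simp
      ultimately show ?thesis using phi_nonneg[OF x, of "nup i" "fst T i"] by linarith
    qed
    ultimately show ?thesis unfolding Par_def by auto
  qed
  show "LT T mu \<in> Ptup k" unfolding Ptup_def using Lpar by (auto simp: LT_def)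
  show "AT T mu \<in> Ptup k" unfolding Ptup_def using Apar by (auto simp: AT_def)
  show "T \<in> uCLR k (LT T mu) (AT T mu) nup num" unfolding uCLR_mem
  proof (intro conjI ballI allI impI)
    fix i assume i: "i \<in> {1..k}"
    have S: "fst T i \<in> SST (nup i)" "snd T i \<in> SST (num i)" using good_SST[OF g i] by auto
    have le1: "le_lam (eps_vec (nup i) (fst T i)) (AT T mu i)" and le2: "le_lam (eps_vec (num i) (snd T i)) (AT T mu i)"
      unfolding le_lam_def using a1[OF i] by auto
    have w1: "\<forall>j. AT T mu i j + wt (nup i) (fst T i) j = LT T mu i j" using Al[OF i] Ll[OF i] by simp
    have w2: "\<forall>j. AT T mu i j + wt (num i) (snd T i) j = LT T mu (prev k i) j"
    proof
      fix j
      have base: "AT T mu i j + wt (num i) (snd T i) j = LT T mu i j - wtT nup num T i j"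
        using Al[OF i] Ll[OF i] unfolding wtT_def by simp
      show "AT T mu i j + wt (num i) (snd T i) j = LT T mu (prev k i) j"
      proof (cases "i = 1")
        case True
        have k': "k \<in> {1..k}" using k1 by simp
        have "wtT nup num T 1 j + cum T k j = 0" using g sum_W_cum unfolding good_def by metis
        thus ?thesis using base True Ll[OF i] Ll[OF k'] prev_1 by (simp add: cum_def)
      next
        case False
        hence i1: "1 \<le> i - 1" and ip: "i - 1 \<in> {1..k}" and si: "Suc (i - 1) = i" using i by auto
        have "cum T i j = cum T (i - 1) j + wtT nup num T i j" using cum_Suc[OF i1, of T j] si by simp
        moreover have "prev k i = i - 1" using False unfolding prev_def by simp
        ultimately show ?thesis using base Ll[OF i] Ll[OF ip] by simp
      qed
    qed
    show "fst T i \<in> CLR (LT T mu i) (AT T mu i) (nup i)" unfolding CLR_def using S le1 w1 by blast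
    show "snd T i \<in> CLR (LT T mu (prev k i)) (AT T mu i) (num i)" unfolding CLR_def using S le2 w2 by blast
  next
    fix i assume "i \<notin> {1..k}"
    thus "fst T i = ztab" "snd T i = ztab" using g unfolding good_def by auto
  qed
qed

end


context setting begin

lemma fwd_mu:
  assumes l: "l \<in> Ptup k" and a: "a \<in> Ptup k" and T: "T \<in> uCLR k l a nup num"
  defines "mu \<equiv> (\<lambda>j. l 1 j - lmin k nup num T j)"
  shows "mu \<in> Par" "LT T mu = l" "AT T mu = a"
proof -
  have g: "good T" using fwd(1)[OF T] .
  have ii: "\<forall>i\<in>{1..k}. \<forall>j. l i j = l 1 j + cum T i j" using fwd(2)[OF T] .
  have iii: "\<forall>i\<in>{1..k}. \<forall>j. a i j = l i j - wt (nup i) (fst T i) j" using fwd(3)[OF T] .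
  have iv: "\<forall>i\<in>{1..k}. \<forall>x\<ge>1. oc (Splus nup num T i) x \<le> oc (l 1) x \<and> oc (Sminus nup num T i) x \<le> oc (l 1) x"
    using fwd(4)[OF T] .
  have one: "1 \<in> {1..k}" using k1 by simp
  have l1: "l 1 \<in> Par" using l one unfolding Ptup_def by blast
  have lL: "lmin k nup num T \<in> Lam" by (rule lmin_Lam)
  have "fs mu" unfolding mu_def using Par_Lam[OF l1] lL unfolding Lam_iff_fs by (intro fs_diff) auto
  moreover have "mu 0 = 0" unfolding mu_def using Par_Lam[OF l1] lL unfolding Lam_iff_fs by simp
  moreover have "0 \<le> oc mu x" if x: "1 \<le> x" for x
  proof -
    have "cf T x \<le> oc (l 1) x" using iv x by (intro cf_le) auto
    thus ?thesis unfolding mu_def using oc_lmin[OF x, of T] unfolding oc_def by simp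
  qed
  ultimately have "mu \<in> Lam" "\<forall>x\<ge>1. 0 \<le> oc mu x" unfolding Lam_iff_fs by blast+
  thus "mu \<in> Par" unfolding Par_def by blast
  show "LT T mu = l"
  proof
    fix i show "LT T mu i = l i"
    proof (cases "i \<in> {1..k}")
      case True
      show ?thesis
      proof
        fix j
        have "l i j = l 1 j + cum T i j" using ii True by blast
        thus "LT T mu i j = l i j" using True unfolding LT_def lamT_eq mu_def by simp
      qed
    next
      case False
      have "LT T mu i = zerop" unfolding LT_def by (simp only: if_not_P[OF False])
      moreover have "l i = zerop" using l False unfolding Ptup_def by blast
      ultimately show ?thesis by simp
    qed
  qed
  show "AT T mu = a"
  proof
    fix i show "AT T mu i = a i"
    proof (cases "i \<in> {1..k}")
      case True
      show ?thesis
      proof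
        fix j
        have "l i j = l 1 j + cum T i j" "a i j = l i j - wt (nup i) (fst T i) j" using ii iii True by blast+
        thus "AT T mu i j = a i j" using True unfolding AT_def LT_def lamT_eq mu_def by simp
      qed
    next
      case False
      have "AT T mu i = zerop" unfolding AT_def by (simp only: if_not_P[OF False])
      moreover have "a i = zerop" using a False unfolding Ptup_def by blast
      ultimately show ?thesis by simp
    qed
  qed
qed

lemma LT_mu: "LT T mu 1 j - lmin k nup num T j = mu j"
  using k1 unfolding LT_def lamT_eq by (simp add: cum_def)

lemma psize_LT:
  assumes g: "good T" and mu: "mu \<in> Par"
  shows "(\<Sum>i\<in>{1..k}. psize (LT T mu i)) = tot_size k nup num T + int k * psize mu"
proof -
  have "psize (LT T mu i) = psize (lamT k nup num T i) + psize mu" if i: "i \<in> {1..k}" for i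
  proof -
    have "LT T mu i = (\<lambda>j. lamT k nup num T i j + mu j)" using i unfolding LT_def by simp
    thus ?thesis using psize_add[OF lamT_Lam[OF g i] Par_Lam[OF mu]] by simp
  qed
  hence "(\<Sum>i\<in>{1..k}. psize (LT T mu i)) = (\<Sum>i\<in>{1..k}. psize (lamT k nup num T i) + psize mu)"
    by (rule sum.cong[OF refl])
  also have "\<dots> = tot_size k nup num T + int k * psize mu" unfolding tot_size_def by (simp add: sum.distrib)
  finally show ?thesis .
qed

lemma D_iff: "T \<in> Dset k nup num \<longleftrightarrow> good T"
proof
  assume "T \<in> Dset k nup num"
  then obtain l a where "l \<in> Ptup k" "a \<in> Ptup k" "T \<in> uCLR k l a nup num" unfolding Dset_def by blast
  thus "good T" using fwd(1) by blast
next
  assume g: "good T"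
  show "T \<in> Dset k nup num" unfolding Dset_def using bwd[OF g zerop_Par] by blast
qed

lemma tot_size_nonneg: "good T \<Longrightarrow> 0 \<le> tot_size k nup num T"
proof -
  assume g: "good T"
  have "0 \<le> psize (LT T zerop i)" if "i \<in> {1..k}" for i
    using bwd(1)[OF g zerop_Par] that psize_nonneg unfolding Ptup_def by blast
  hence "0 \<le> (\<Sum>i\<in>{1..k}. psize (LT T zerop i))" by (rule sum_nonneg)
  moreover have "psize zerop = 0" by (simp add: psize_def zerop_def)
  ultimately show ?thesis using psize_LT[OF g zerop_Par] by simp
qed

end


lemma finite_fun2: "finite {Q :: nat \<Rightarrow> nat \<Rightarrow> nat. \<forall>j v. Q j v \<le> C \<and> (Q j v \<noteq> 0 \<longrightarrow> j \<le> N \<and> v \<le> B)}"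
proof (rule finite_subset)
  let ?f = "\<lambda>g :: nat \<times> nat \<Rightarrow> nat. \<lambda>j v. if j \<le> N \<and> v \<le> B then g (j, v) else 0"
  show "{Q :: nat \<Rightarrow> nat \<Rightarrow> nat. \<forall>j v. Q j v \<le> C \<and> (Q j v \<noteq> 0 \<longrightarrow> j \<le> N \<and> v \<le> B)}
        \<subseteq> ?f ` (({0..N} \<times> {0..B}) \<rightarrow>\<^sub>E {0..C})"
  proof
    fix Q :: "nat \<Rightarrow> nat \<Rightarrow> nat"
    assume Q: "Q \<in> {Q. \<forall>j v. Q j v \<le> C \<and> (Q j v \<noteq> 0 \<longrightarrow> j \<le> N \<and> v \<le> B)}"
    have "Q = ?f (restrict (case_prod Q) ({0..N} \<times> {0..B}))"
    proof (intro ext)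
      fix j v
      show "Q j v = ?f (restrict (case_prod Q) ({0..N} \<times> {0..B})) j v"
        using Q by (cases "j \<le> N \<and> v \<le> B") auto
    qed
    moreover have "restrict (case_prod Q) ({0..N} \<times> {0..B}) \<in> ({0..N} \<times> {0..B}) \<rightarrow>\<^sub>E {0..C}"
      using Q by auto
    ultimately show "Q \<in> ?f ` (({0..N} \<times> {0..B}) \<rightarrow>\<^sub>E {0..C})" by blast
  qed
  show "finite (?f ` (({0..N} \<times> {0..B}) \<rightarrow>\<^sub>E {0..C}))" by (intro finite_imageI finite_PiE) auto
qed

lemma finite_Mset: "finite (Mset la al nu)"
proof (rule finite_subset[OF _ finite_fun2[of "\<Sum>j\<in>{0..nrows nu}. nat (nu j)" "nrows nu" "nrows la"]])
  show "Mset la al nu \<subseteq> {Q. \<forall>j v. Q j v \<le> (\<Sum>j\<in>{0..nrows nu}. nat (nu j)) \<and> (Q j v \<noteq> 0 \<longrightarrow> j \<le> nrows nu \<and> v \<le> nrows la)}"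
  proof
    fix Q assume Q: "Q \<in> Mset la al nu"
    have supp: "\<forall>j v. Q j v \<noteq> 0 \<longrightarrow> 1 \<le> j \<and> j \<le> nrows nu \<and> 1 \<le> v \<and> v \<le> nrows la"
      and rows: "\<forall>j. (\<Sum>v\<in>{1..nrows la}. Q j v) = nat (nu j)" using Q unfolding Mset_def by auto
    have "Q j v \<le> (\<Sum>j\<in>{0..nrows nu}. nat (nu j))" for j v
    proof (cases "Q j v = 0")
      case False
      hence jv: "1 \<le> j" "j \<le> nrows nu" "1 \<le> v" "v \<le> nrows la" using supp by auto
      have "Q j v \<le> (\<Sum>v\<in>{1..nrows la}. Q j v)" by (rule member_le_sum) (use jv in auto)
      also have "\<dots> = nat (nu j)" using rows by blast
      also have "\<dots> \<le> (\<Sum>j\<in>{0..nrows nu}. nat (nu j))" by (rule member_le_sum) (use jv in auto)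
      finally show ?thesis .
    qed simp
    thus "Q \<in> {Q. \<forall>j v. Q j v \<le> (\<Sum>j\<in>{0..nrows nu}. nat (nu j)) \<and> (Q j v \<noteq> 0 \<longrightarrow> j \<le> nrows nu \<and> v \<le> nrows la)}"
      using supp by blast
  qed
qed

lemma finite_CLR:
  assumes la: "la \<in> Par" and al: "al \<in> Par" and nu: "nu \<in> Par"
  shows "finite (CLR la al nu)"
proof (cases "\<forall>j. al j \<le> la j")
  case True thus ?thesis using bij_betw_finite[OF CLR_bij[OF la al nu True]] finite_Mset by blast
next
  case False
  hence "CLR la al nu = {}" using CLR_nonempty_le by blast
  thus ?thesis by simp
qed

context setting begin

lemma Ptup_Par: "l \<in> Ptup k \<Longrightarrow> i \<in> {1..k} \<Longrightarrow> l i \<in> Par" unfolding Ptup_def by blast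

lemma prev_in: "i \<in> {1..k} \<Longrightarrow> prev k i \<in> {1..k}" unfolding prev_def by auto

lemma uCLR_bij:
  "bij_betw (\<lambda>T. restrict (\<lambda>i. (fst T i, snd T i)) {1..k}) (uCLR k l a nup num)
     (\<Pi>\<^sub>E i\<in>{1..k}. CLR (l i) (a i) (nup i) \<times> CLR (l (prev k i)) (a i) (num i))"
  unfolding bij_betw_def
proof
  show "inj_on (\<lambda>T. restrict (\<lambda>i. (fst T i, snd T i)) {1..k}) (uCLR k l a nup num)"
  proof
    fix T T' assume T: "T \<in> uCLR k l a nup num" and T': "T' \<in> uCLR k l a nup num"
      and e: "restrict (\<lambda>i. (fst T i, snd T i)) {1..k} = restrict (\<lambda>i. (fst T' i, snd T' i)) {1..k}"
    have "fst T i = fst T' i \<and> snd T i = snd T' i" for i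
    proof (cases "i \<in> {1..k}")
      case True thus ?thesis using fun_cong[OF e, of i] by simp
    next
      case False thus ?thesis using T T' uCLR_mem by metis
    qed
    thus "T = T'" by (simp add: prod_eq_iff fun_eq_iff)
  qed
  show "(\<lambda>T. restrict (\<lambda>i. (fst T i, snd T i)) {1..k}) ` uCLR k l a nup num =
     (\<Pi>\<^sub>E i\<in>{1..k}. CLR (l i) (a i) (nup i) \<times> CLR (l (prev k i)) (a i) (num i))"
  proof
    show "(\<lambda>T. restrict (\<lambda>i. (fst T i, snd T i)) {1..k}) ` uCLR k l a nup num \<subseteq>
     (\<Pi>\<^sub>E i\<in>{1..k}. CLR (l i) (a i) (nup i) \<times> CLR (l (prev k i)) (a i) (num i))"
      using uCLR_mem by auto
    show "(\<Pi>\<^sub>E i\<in>{1..k}. CLR (l i) (a i) (nup i) \<times> CLR (l (prev k i)) (a i) (num i)) \<subseteq>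
       (\<lambda>T. restrict (\<lambda>i. (fst T i, snd T i)) {1..k}) ` uCLR k l a nup num"
    proof
      fix h assume h: "h \<in> (\<Pi>\<^sub>E i\<in>{1..k}. CLR (l i) (a i) (nup i) \<times> CLR (l (prev k i)) (a i) (num i))"
      define T where "T = ((\<lambda>i. if i \<in> {1..k} then fst (h i) else ztab), (\<lambda>i. if i \<in> {1..k} then snd (h i) else ztab))"
      have "T \<in> uCLR k l a nup num" unfolding uCLR_mem T_def using h by (auto simp: PiE_iff mem_Times_iff)
      moreover have "restrict (\<lambda>i. (fst T i, snd T i)) {1..k} = h"
        using h unfolding T_def by (auto simp: fun_eq_iff PiE_iff extensional_def)
      ultimately show "h \<in> (\<lambda>T. restrict (\<lambda>i. (fst T i, snd T i)) {1..k}) ` uCLR k l a nup num" by force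
    qed
  qed
qed

lemma uCLR_card:
  assumes l: "l \<in> Ptup k" and a: "a \<in> Ptup k"
  shows "finite (uCLR k l a nup num)" "int (card (uCLR k l a nup num)) = lrprod k nup num a l"
proof -
  have fin: "finite (CLR (l i) (a i) (nup i) \<times> CLR (l (prev k i)) (a i) (num i))" if i: "i \<in> {1..k}" for i
    using finite_CLR Ptup_Par[OF l i] Ptup_Par[OF a i] Ptup_Par[OF l prev_in[OF i]] pars i by blast
  show "finite (uCLR k l a nup num)" using bij_betw_finite[OF uCLR_bij] fin by (auto intro: finite_PiE)
  have "card (uCLR k l a nup num) = card (\<Pi>\<^sub>E i\<in>{1..k}. CLR (l i) (a i) (nup i) \<times> CLR (l (prev k i)) (a i) (num i))"
    by (rule bij_betw_same_card[OF uCLR_bij])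
  also have "\<dots> = (\<Prod>i\<in>{1..k}. card (CLR (l i) (a i) (nup i)) * card (CLR (l (prev k i)) (a i) (num i)))"
    by (simp add: card_PiE card_cartesian_product)
  also have "\<dots> = (\<Prod>i\<in>{1..k}. lrc (l i) (a i) (nup i) * lrc (l (prev k i)) (a i) (num i))"
    by (rule prod.cong[OF refl]) (use card_CLR Ptup_Par[OF l] Ptup_Par[OF a] prev_in pars in \<open>metis\<close>)
  finally show "int (card (uCLR k l a nup num)) = lrprod k nup num a l" unfolding lrprod_def by simp
qed

end


context setting begin

definition Xn :: "nat \<Rightarrow> ((nat \<Rightarrow> lam) \<times> (nat \<Rightarrow> lam)) set" where
  "Xn n = {(a, l). a \<in> Ptup k \<and> l \<in> Ptup k \<and> (\<Sum>i\<in>{1..k}. psize (l i)) = int n \<and> lrprod k nup num a l \<noteq> 0}"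

definition Zn :: "nat \<Rightarrow> (((nat \<Rightarrow> lam) \<times> (nat \<Rightarrow> lam)) \<times> ttup) set" where
  "Zn n = Sigma (Xn n) (\<lambda>(a, l). uCLR k l a nup num)"

definition Wn :: "nat \<Rightarrow> (ttup \<times> lam) set" where
  "Wn n = {(T, mu). good T \<and> mu \<in> Par \<and> tot_size k nup num T + int k * psize mu = int n}"

definition Dn :: "nat \<Rightarrow> ttup set" where
  "Dn n = {T \<in> Dset k nup num. tot_size k nup num T = int n}"

definition Pm :: "nat \<Rightarrow> lam set" where
  "Pm t = {mu \<in> Par. int k * psize mu = int t}"

definition PF :: "nat \<Rightarrow> (nat \<Rightarrow> lam) set" where
  "PF n = {f \<in> Ptup k. \<forall>i\<in>{1..k}. psize (f i) \<le> int n}"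

lemma finite_PF: "finite (PF n)"
proof (rule finite_subset)
  let ?g = "\<lambda>g :: nat \<Rightarrow> lam. \<lambda>i. if i \<in> {1..k} then g i else zerop"
  show "PF n \<subseteq> ?g ` (\<Pi>\<^sub>E i\<in>{1..k}. {x \<in> Par. psize x \<le> int n})"
  proof
    fix f assume f: "f \<in> PF n"
    have "f = ?g (restrict f {1..k})" using f unfolding PF_def Ptup_def by (auto simp: fun_eq_iff)
    moreover have "restrict f {1..k} \<in> (\<Pi>\<^sub>E i\<in>{1..k}. {x \<in> Par. psize x \<le> int n})"
      using f unfolding PF_def Ptup_def by auto
    ultimately show "f \<in> ?g ` (\<Pi>\<^sub>E i\<in>{1..k}. {x \<in> Par. psize x \<le> int n})" by blast
  qed
  show "finite (?g ` (\<Pi>\<^sub>E i\<in>{1..k}. {x \<in> Par. psize x \<le> int n}))"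
    by (intro finite_imageI finite_PiE finite_Par_le) auto
qed

lemma finite_Xn: "finite (Xn n)"
proof (rule finite_subset[OF _ finite_cartesian_product[OF finite_PF finite_PF]])
  show "Xn n \<subseteq> PF n \<times> PF n"
  proof
    fix x assume x: "x \<in> Xn n"
    then obtain a l where xe: "x = (a, l)" and a: "a \<in> Ptup k" and l: "l \<in> Ptup k"
      and s: "(\<Sum>i\<in>{1..k}. psize (l i)) = int n" and p: "lrprod k nup num a l \<noteq> 0" unfolding Xn_def by blast
    have lb: "psize (l i) \<le> int n" if i: "i \<in> {1..k}" for i
    proof -
      have "psize (l i) \<le> (\<Sum>i\<in>{1..k}. psize (l i))"
        by (rule member_le_sum) (use i psize_nonneg Ptup_Par[OF l] in auto)
      thus ?thesis using s by simp
    qed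
    have ab: "psize (a i) \<le> int n" if i: "i \<in> {1..k}" for i
    proof -
      have "lrc (l i) (a i) (nup i) \<noteq> 0" using p i unfolding lrprod_def by auto
      hence "\<forall>j. a i j \<le> l i j" unfolding lrc_def by (meson)
      hence "psize (a i) \<le> psize (l i)" using psize_mono Ptup_Par[OF a i] Ptup_Par[OF l i] Par_Lam by blast
      thus ?thesis using lb[OF i] by simp
    qed
    show "x \<in> PF n \<times> PF n" unfolding xe PF_def using a l lb ab by blast
  qed
qed

lemma finite_Zn: "finite (Zn n)"
  unfolding Zn_def by (rule finite_SigmaI[OF finite_Xn]) (auto simp: Xn_def intro: uCLR_card(1))

lemma sum_Xn: "(\<Sum>(a, l)\<in>Xn n. lrprod k nup num a l) = int (card (Zn n))"
proof -
  have "(\<Sum>(a, l)\<in>Xn n. lrprod k nup num a l) = (\<Sum>(a, l)\<in>Xn n. int (card (uCLR k l a nup num)))"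
    by (rule sum.cong[OF refl]) (auto simp: Xn_def uCLR_card(2))
  also have "\<dots> = int (\<Sum>(a, l)\<in>Xn n. card (uCLR k l a nup num))" by (simp add: case_prod_unfold)
  also have "(\<Sum>(a, l)\<in>Xn n. card (uCLR k l a nup num)) = card (Zn n)"
  proof -
    have "card (Zn n) = (\<Sum>x\<in>Xn n. card ((\<lambda>(a, l). uCLR k l a nup num) x))"
      unfolding Zn_def by (rule card_SigmaI[OF finite_Xn]) (auto simp: Xn_def intro: uCLR_card(1))
    thus ?thesis by (simp add: case_prod_unfold)
  qed
  finally show ?thesis .
qed

lemma Wn_Zn: "bij_betw (\<lambda>(T, mu). ((AT T mu, LT T mu), T)) (Wn n) (Zn n)"
  unfolding bij_betw_def
proof
  show "inj_on (\<lambda>(T, mu). ((AT T mu, LT T mu), T)) (Wn n)"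
  proof
    fix x y assume "x \<in> Wn n" "y \<in> Wn n" and e: "(\<lambda>(T, mu). ((AT T mu, LT T mu), T)) x = (\<lambda>(T, mu). ((AT T mu, LT T mu), T)) y"
    obtain T mu where x: "x = (T, mu)" by (cases x)
    obtain T' mu' where y: "y = (T', mu')" by (cases y)
    have TT: "T = T'" and LL: "LT T mu = LT T' mu'" using e unfolding x y by auto
    have "mu = mu'"
    proof
      fix j show "mu j = mu' j" using LT_mu[of T mu j] LT_mu[of T' mu' j] LL TT by simp
    qed
    thus "x = y" using x y TT by simp
  qed
  show "(\<lambda>(T, mu). ((AT T mu, LT T mu), T)) ` Wn n = Zn n"
  proof
    show "(\<lambda>(T, mu). ((AT T mu, LT T mu), T)) ` Wn n \<subseteq> Zn n"
    proof
      fix z assume "z \<in> (\<lambda>(T, mu). ((AT T mu, LT T mu), T)) ` Wn n"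
      then obtain x where x: "x \<in> Wn n" "z = (\<lambda>(T, mu). ((AT T mu, LT T mu), T)) x" by blast
      obtain T mu where xe: "x = (T, mu)" by (cases x)
      have w: "(T, mu) \<in> Wn n" and z: "z = ((AT T mu, LT T mu), T)" using x xe by auto
      have g: "good T" and mu: "mu \<in> Par" and ts: "tot_size k nup num T + int k * psize mu = int n"
        using w unfolding Wn_def by auto
      have P: "LT T mu \<in> Ptup k" "AT T mu \<in> Ptup k" "T \<in> uCLR k (LT T mu) (AT T mu) nup num" using bwd[OF g mu] by auto
      have "card (uCLR k (LT T mu) (AT T mu) nup num) \<noteq> 0" using uCLR_card(1)[OF P(1,2)] P(3) by auto
      hence "lrprod k nup num (AT T mu) (LT T mu) \<noteq> 0" using uCLR_card(2)[OF P(1,2)] by simp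
      moreover have "(\<Sum>i\<in>{1..k}. psize (LT T mu i)) = int n" using psize_LT[OF g mu] ts by simp
      ultimately have "(AT T mu, LT T mu) \<in> Xn n" unfolding Xn_def using P by blast
      thus "z \<in> Zn n" unfolding z Zn_def using P(3) by simp
    qed
    show "Zn n \<subseteq> (\<lambda>(T, mu). ((AT T mu, LT T mu), T)) ` Wn n"
    proof
      fix z assume z: "z \<in> Zn n"
      then obtain a l T where ze: "z = ((a, l), T)" and X: "(a, l) \<in> Xn n" and T: "T \<in> uCLR k l a nup num"
        unfolding Zn_def by auto
      have a: "a \<in> Ptup k" and l: "l \<in> Ptup k" and s: "(\<Sum>i\<in>{1..k}. psize (l i)) = int n" using X unfolding Xn_def by auto
      define mu where "mu = (\<lambda>j. l 1 j - lmin k nup num T j)"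
      have mu: "mu \<in> Par" "LT T mu = l" "AT T mu = a" using fwd_mu[OF l a T] unfolding mu_def by auto
      have g: "good T" using fwd(1)[OF T] .
      have "tot_size k nup num T + int k * psize mu = int n" using psize_LT[OF g mu(1)] mu(2) s by simp
      hence "(T, mu) \<in> Wn n" unfolding Wn_def using g mu(1) by simp
      moreover have "z = (\<lambda>(T, mu). ((AT T mu, LT T mu), T)) (T, mu)" using ze mu by simp
      ultimately show "z \<in> (\<lambda>(T, mu). ((AT T mu, LT T mu), T)) ` Wn n" by blast
    qed
  qed
qed

lemma finite_Wn: "finite (Wn n)" using bij_betw_finite[OF Wn_Zn] finite_Zn by blast
lemma card_Wn: "card (Wn n) = card (Zn n)" using bij_betw_same_card[OF Wn_Zn] .

end


context setting begin

lemma Wn_decomp: "Wn n = (\<Union>m\<in>{0..n}. Dn m \<times> Pm (n - m))"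
proof
  show "Wn n \<subseteq> (\<Union>m\<in>{0..n}. Dn m \<times> Pm (n - m))"
  proof
    fix x assume x: "x \<in> Wn n"
    obtain T mu where xe: "x = (T, mu)" by (cases x)
    have g: "good T" and mu: "mu \<in> Par" and ts: "tot_size k nup num T + int k * psize mu = int n"
      using x xe unfolding Wn_def by auto
    have t0: "0 \<le> tot_size k nup num T" using tot_size_nonneg[OF g] .
    have p0: "0 \<le> int k * psize mu" using psize_nonneg[OF mu] by simp
    define m where "m = nat (tot_size k nup num T)"
    have mt: "int m = tot_size k nup num T" unfolding m_def using t0 by simp
    have mn: "m \<le> n" using mt ts p0 by linarith
    have "T \<in> Dn m" unfolding Dn_def using D_iff g mt by simp
    moreover have "mu \<in> Pm (n - m)" unfolding Pm_def using mu ts mt mn by (simp add: of_nat_diff)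
    ultimately show "x \<in> (\<Union>m\<in>{0..n}. Dn m \<times> Pm (n - m))" using xe mn by auto
  qed
  show "(\<Union>m\<in>{0..n}. Dn m \<times> Pm (n - m)) \<subseteq> Wn n"
  proof
    fix x assume "x \<in> (\<Union>m\<in>{0..n}. Dn m \<times> Pm (n - m))"
    then obtain m T mu where m: "m \<le> n" and xe: "x = (T, mu)" and T: "T \<in> Dn m" and mu: "mu \<in> Pm (n - m)" by auto
    have "good T" "tot_size k nup num T = int m" using T D_iff unfolding Dn_def by auto
    moreover have "mu \<in> Par" "int k * psize mu = int (n - m)" using mu unfolding Pm_def by auto
    ultimately show "x \<in> Wn n" unfolding Wn_def xe using m by (simp add: of_nat_diff)
  qed
qed

lemma finite_Dn: "finite (Dn m)"
proof -
  have "Dn m \<subseteq> fst ` Wn m"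
  proof
    fix T assume T: "T \<in> Dn m"
    have "(T, zerop) \<in> Wn m" using T D_iff zerop_Par unfolding Dn_def Wn_def by (simp add: psize_def zerop_def)
    thus "T \<in> fst ` Wn m" by force
  qed
  thus ?thesis using finite_Wn by (rule finite_subset[OF _ finite_imageI])
qed

lemma finite_Pm: "finite (Pm t)"
proof (rule finite_subset[OF _ finite_Par_le[of t]])
  show "Pm t \<subseteq> {x \<in> Par. psize x \<le> int t}"
  proof
    fix mu assume "mu \<in> Pm t"
    hence mu: "mu \<in> Par" "int k * psize mu = int t" unfolding Pm_def by auto
    have "psize mu \<le> int k * psize mu" using psize_nonneg[OF mu(1)] k1 by (simp add: mult_le_cancel_right1)
    thus "mu \<in> {x \<in> Par. psize x \<le> int t}" using mu by simp
  qed
qed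

lemma card_Wn_sum: "card (Wn n) = (\<Sum>m\<in>{0..n}. card (Dn m) * card (Pm (n - m)))"
proof -
  have "card (Wn n) = (\<Sum>m\<in>{0..n}. card (Dn m \<times> Pm (n - m)))"
    unfolding Wn_decomp
  proof (rule card_UN_disjoint)
    show "finite {0..n}" by simp
    show "\<forall>m\<in>{0..n}. finite (Dn m \<times> Pm (n - m))" using finite_Dn finite_Pm by blast
    show "\<forall>m\<in>{0..n}. \<forall>m'\<in>{0..n}. m \<noteq> m' \<longrightarrow> Dn m \<times> Pm (n - m) \<inter> Dn m' \<times> Pm (n - m') = {}"
      unfolding Dn_def by auto
  qed
  thus ?thesis by (simp add: card_cartesian_product)
qed

lemma card_Pm: "int (card (Pm t)) = fps_nth (Pall k) t"
proof (cases "k dvd t")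
  case True
  then obtain s where t: "t = k * s" by blast
  have "Pm t = {x \<in> Par. psize x = int (t div k)}"
  proof -
    have "int k * p = int t \<longleftrightarrow> p = int s" for p using t k1 by (auto simp: algebra_simps)
    moreover have "t div k = s" using t k1 by simp
    ultimately show ?thesis unfolding Pm_def by simp
  qed
  thus ?thesis unfolding Pall_def using True by simp
next
  case False
  have "Pm t = {}"
  proof (rule ccontr)
    assume "Pm t \<noteq> {}"
    then obtain mu where mu: "mu \<in> Par" "int k * psize mu = int t" unfolding Pm_def by auto
    have "t = k * nat (psize mu)" using mu psize_nonneg[OF mu(1)] by (metis nat_int nat_mult_distrib of_nat_0_le_iff nat_0_le)
    thus False using False by simp
  qed
  thus ?thesis unfolding Pall_def using False by simp
qed

lemma main: "(\<forall>n. finite (Dn n)) \<and> m_inf k nup num = Abs_fps (\<lambda>n. int (card (Dn n)))"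
proof
  show "\<forall>n. finite (Dn n)" using finite_Dn by blast
  define R where "R = Abs_fps (\<lambda>n. int (card (Dn n)))"
  have S: "Abs_fps (\<lambda>n. \<Sum>(a, l)\<in>{(a, l). a \<in> Ptup k \<and> l \<in> Ptup k \<and> (\<Sum>i\<in>{1..k}. psize (l i)) = int n
                       \<and> lrprod k nup num a l \<noteq> 0}. lrprod k nup num a l) = R * Pall k"
  proof (rule fps_ext)
    fix n
    have "fps_nth (Abs_fps (\<lambda>n. \<Sum>(a, l)\<in>{(a, l). a \<in> Ptup k \<and> l \<in> Ptup k \<and> (\<Sum>i\<in>{1..k}. psize (l i)) = int n
                       \<and> lrprod k nup num a l \<noteq> 0}. lrprod k nup num a l)) n = int (card (Zn n))"
      using sum_Xn[of n] unfolding Xn_def by simp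
    also have "\<dots> = int (card (Wn n))" using card_Wn by simp
    also have "\<dots> = (\<Sum>m\<in>{0..n}. int (card (Dn m)) * int (card (Pm (n - m))))" using card_Wn_sum by simp
    also have "\<dots> = (\<Sum>m\<in>{0..n}. fps_nth R m * fps_nth (Pall k) (n - m))"
      unfolding R_def using card_Pm by simp
    also have "\<dots> = fps_nth (R * Pall k) n" by (rule fps_mult_nth[symmetric])
    finally show "fps_nth (Abs_fps (\<lambda>n. \<Sum>(a, l)\<in>{(a, l). a \<in> Ptup k \<and> l \<in> Ptup k \<and> (\<Sum>i\<in>{1..k}. psize (l i)) = int n
                       \<and> lrprod k nup num a l \<noteq> 0}. lrprod k nup num a l)) n = fps_nth (R * Pall k) n" .
  qed
  have "m_inf k nup num = euler_factor k * (R * Pall k)" unfolding m_inf_def S ..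
  also have "\<dots> = R * (euler_factor k * Pall k)" by (simp add: algebra_simps)
  also have "\<dots> = R" using euler_Pall[OF k1] by simp
  finally show "m_inf k nup num = Abs_fps (\<lambda>n. int (card (Dn n)))" unfolding R_def .
qed

end

theorem mainTheorem12:
  fixes k :: nat and nup num :: "nat \<Rightarrow> lam"
  assumes "k \<ge> 1"
    and "\<forall>i\<in>{1..k}. nup i \<in> Par \<and> num i \<in> Par"
  shows "(\<forall>n. finite {T \<in> Dset k nup num. tot_size k nup num T = int n}) \<and>
         m_inf k nup num =
           Abs_fps (\<lambda>n. int (card {T \<in> Dset k nup num. tot_size k nup num T = int n}))"
proof -
  interpret setting k nup num using assms by unfold_locales auto
  show ?thesis using main unfolding Dn_def .
qed


end
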